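(* Let ${\rm K}/\mathbb{Q}$ be a finite Galois extension of degree $m$ and let $u\in E_{\rm K}\cap\mathbb{S}$. Then there exist an integer $k\ge1$ and a constant $c>0$ (depending on $u$, $k$ and $m$) such that $|{\rm N}(\Phi_n(u^k))|\ge \exp(cn)$ for every positive integer $n$ with $\varphi(n)\ge \frac12 n$.
   Context: $E_{\rm K}$ is the unit group of $\mathcal{O}_{\rm K}$; ${\rm N}$ is the norm from ${\rm K}$ to $\mathbb{Q}$; $\Phi_n$ is the $n$-th cyclotomic polynomial and $\varphi$ Euler's totient function. $\mathbb{S}$ is the set of algebraic integers none of whose conjugates lies on the complex unit circle. *)

theory Defs
  imports "HOL-Analysis.Analysis" "HOL-Computational_Algebra.Polynomial"
    "HOL-Number_Theory.Number_Theory" "HOL-Library.FuncSet"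
begin

text \<open>Number fields are modelled as subfields of the complex numbers.\<close>

definition subfield_C :: "complex set \<Rightarrow> bool" where
  "subfield_C K \<longleftrightarrow> 0 \<in> K \<and> 1 \<in> K \<and>
     (\<forall>x\<in>K. \<forall>y\<in>K. x + y \<in> K \<and> x * y \<in> K) \<and>
     (\<forall>x\<in>K. - x \<in> K) \<and> (\<forall>x\<in>K. x \<noteq> 0 \<longrightarrow> inverse x \<in> K)"

definition degree_over_Q :: "complex set \<Rightarrow> nat \<Rightarrow> bool" where
  "degree_over_Q K m \<longleftrightarrow> (\<exists>B. finite B \<and> card B = m \<and> B \<subseteq> K \<and>
     (\<forall>c :: complex \<Rightarrow> rat. (\<Sum>b\<in>B. of_rat (c b) * b) = 0 \<longrightarrow> (\<forall>b\<in>B. c b = 0)) \<and>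
     (\<forall>x\<in>K. \<exists>c :: complex \<Rightarrow> rat. x = (\<Sum>b\<in>B. of_rat (c b) * b)))"

definition embeddings :: "complex set \<Rightarrow> (complex \<Rightarrow> complex) set" where
  "embeddings K = {\<sigma> \<in> K \<rightarrow>\<^sub>E UNIV. \<sigma> 1 = 1 \<and>
     (\<forall>x\<in>K. \<forall>y\<in>K. \<sigma> (x + y) = \<sigma> x + \<sigma> y \<and> \<sigma> (x * y) = \<sigma> x * \<sigma> y)}"

text \<open>K/Q finite Galois of degree m (normality: every embedding maps K into K).\<close>
definition galois_number_field :: "complex set \<Rightarrow> nat \<Rightarrow> bool" where
  "galois_number_field K m \<longleftrightarrow> subfield_C K \<and> degree_over_Q K m \<and>
     (\<forall>\<sigma>\<in>embeddings K. \<sigma> ` K \<subseteq> K)"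

definition nf_norm :: "complex set \<Rightarrow> complex \<Rightarrow> complex" where
  "nf_norm K x = (\<Prod>\<sigma>\<in>embeddings K. \<sigma> x)"

definition ring_of_integers :: "complex set \<Rightarrow> complex set" where
  "ring_of_integers K = {x \<in> K. algebraic_int x}"

definition unit_group :: "complex set \<Rightarrow> complex set" where
  "unit_group K = {x \<in> ring_of_integers K. x \<noteq> 0 \<and> inverse x \<in> ring_of_integers K}"

text \<open>Conjugates of x over Q: roots of the minimal polynomial, i.e. common roots of
  all rational polynomials vanishing at x.\<close>
definition conjugates :: "complex \<Rightarrow> complex set" where
  "conjugates x = {z. \<forall>p :: rat poly. poly (map_poly of_rat p) x = 0 \<longrightarrow> poly (map_poly of_rat p) z = 0}"

definition S_set :: "complex set" where
  "S_set = {x. algebraic_int x \<and> (\<forall>z\<in>conjugates x. cmod z \<noteq> 1)}"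

definition cyclotomic :: "nat \<Rightarrow> complex poly" where
  "cyclotomic n = (\<Prod>j\<in>{j\<in>{1..n}. coprime j n}. [:- cis (2 * pi * real j / real n), 1:])"

end

theory Submission
  imports Defs "HOL-Library.Function_Algebras" "HOL-Computational_Algebra.Fundamental_Theorem_Algebra"
begin

definition intpoly :: "complex poly \<Rightarrow> bool" where
  "intpoly P \<longleftrightarrow> (\<forall>i. poly.coeff P i \<in> \<int>)"

lemma intpoly_1[simp]: "intpoly 1"
  by (auto simp: intpoly_def coeff_1)

lemma intpoly_mult: "intpoly P \<Longrightarrow> intpoly Q \<Longrightarrow> intpoly (P * Q)"
  unfolding intpoly_def coeff_mult by (auto intro!: Ints_sum Ints_mult)

lemma intpoly_prod: "(\<And>x. x \<in> A \<Longrightarrow> intpoly (f x)) \<Longrightarrow> intpoly (\<Prod>x\<in>A. f x)"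
  by (induction A rule: infinite_finite_induct) (auto intro: intpoly_mult)

lemma map_poly_of_int_mult:
  "map_poly (of_int :: int \<Rightarrow> 'a::comm_ring_1) (p * q) = map_poly of_int p * map_poly of_int q"
  by (rule poly_eqI) (simp add: coeff_map_poly coeff_mult)

lemma map_poly_of_int_add:
  "map_poly (of_int :: int \<Rightarrow> 'a::comm_ring_1) (p + q) = map_poly of_int p + map_poly of_int q"
  by (rule poly_eqI) (simp add: coeff_map_poly)

lemma intpoly_map: "intpoly (map_poly of_int p)"
  by (auto simp: intpoly_def coeff_map_poly)

lemma intpoly_div:
  assumes "A = B * C" "intpoly A" "intpoly B" "lead_coeff B = 1"
  shows "intpoly C"
proof -
  obtain a where a: "A = map_poly of_int a" using assms(2) unfolding intpoly_def by (metis intpolyE)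
  obtain b where b: "B = map_poly of_int b" using assms(3) unfolding intpoly_def by (metis intpolyE)
  have B0: "B \<noteq> 0" using assms(4) by auto
  have deg: "degree B = degree b" unfolding b by (rule degree_map_poly) auto
  have lb: "lead_coeff b = 1"
  proof -
    have "poly.coeff B (degree B) = of_int (poly.coeff b (degree b))" by (simp add: b deg[unfolded b] coeff_map_poly)
    thus ?thesis using assms(4) by simp
  qed
  have b0: "b \<noteq> 0" using B0 b by auto
  obtain q r where qr: "pseudo_divmod a b = (q, r)" by (cases "pseudo_divmod a b") auto
  from pseudo_divmod[OF b0 qr] lb have e1: "a = b * q + r" and e2: "r = 0 \<or> degree r < degree b" by auto
  define Q where "Q = (map_poly of_int q :: complex poly)"
  define R where "R = (map_poly of_int r :: complex poly)"
  have "A = B * Q + R" unfolding a b Q_def R_def e1 by (simp add: map_poly_of_int_mult map_poly_of_int_add)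
  hence eq: "B * (C - Q) = R" using assms(1) by (simp add: algebra_simps)
  have degR: "R = 0 \<or> degree R < degree B"
  proof -
    have "degree R = degree r" unfolding R_def by (rule degree_map_poly) auto
    moreover have "R = 0 \<longleftrightarrow> r = 0" unfolding R_def by (auto simp: poly_eq_iff coeff_map_poly)
    ultimately show ?thesis using e2 deg by auto
  qed
  have "C = Q"
  proof (rule ccontr)
    assume "C \<noteq> Q"
    hence "C - Q \<noteq> 0" by auto
    hence "degree (B * (C - Q)) = degree B + degree (C - Q)" "B * (C - Q) \<noteq> 0"
      using B0 by (auto simp: degree_mult_eq)
    thus False using degR eq by auto
  qed
  thus ?thesis unfolding Q_def by (simp add: intpoly_map)
qed

lemma prod_roots_dvd:
  fixes p :: "complex poly"
  assumes "finite A" "\<And>a. a \<in> A \<Longrightarrow> poly p a = 0"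
  shows "(\<Prod>a\<in>A. [:-a, 1:]) dvd p"
  using assms
proof (induction A arbitrary: p rule: finite_induct)
  case empty thus ?case by simp
next
  case (insert a A)
  from insert have "(\<Prod>a\<in>A. [:-a, 1:]) dvd p" by auto
  then obtain s where s: "p = (\<Prod>a\<in>A. [:-a, 1:]) * s" by (elim dvdE)
  have "poly (\<Prod>a\<in>A. [:-a, 1:]) a \<noteq> 0" using insert(1,2) by (auto simp: poly_prod prod_zero_iff)
  moreover have "poly p a = 0" using insert by auto
  ultimately have "poly s a = 0" using s by simp
  hence "[:-a,1:] dvd s" by (simp add: poly_eq_0_iff_dvd)
  then obtain t where t: "s = [:-a,1:] * t" by (elim dvdE)
  have "p = (\<Prod>a\<in>insert a A. [:-a, 1:]) * t" using insert(1,2) s t by (simp add: algebra_simps)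
  thus ?case by simp
qed

lemma monic_eq_prod_roots:
  fixes p :: "complex poly"
  assumes "finite A" "\<And>a. a \<in> A \<Longrightarrow> poly p a = 0" "lead_coeff p = 1" "degree p = card A"
  shows "p = (\<Prod>a\<in>A. [:-a, 1:])"
proof -
  have "(\<Prod>a\<in>A. [:-a, 1:]) dvd p" by (rule prod_roots_dvd) (use assms in auto)
  then obtain s where s: "p = (\<Prod>a\<in>A. [:-a, 1:]) * s" by (elim dvdE)
  have p0: "p \<noteq> 0" using assms(3) by auto
  hence s0: "s \<noteq> 0" using s by auto
  have P0: "(\<Prod>a\<in>A. [:-a, 1:]) \<noteq> (0::complex poly)" by (simp add: assms(1))
  have dP: "degree (\<Prod>a\<in>A. [:-a, 1:]) = card (A::complex set)"
    by (subst degree_prod_eq_sum_degree) auto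
  have "degree p = card A + degree s" using s s0 P0 dP by (simp add: degree_mult_eq)
  hence "degree s = 0" using assms(4) by simp
  then obtain c where c: "s = [:c:]" by (elim degree_eq_zeroE)
  have "lead_coeff p = c" using s c by (simp add: lead_coeff_mult lead_coeff_prod)
  hence "c = 1" using assms(3) by simp
  thus ?thesis using s c by simp
qed

lemma xn_minus_1:
  assumes "n > 0"
  shows "(Polynomial.monom 1 n - 1 :: complex poly) = (\<Prod>z\<in>{z. z ^ n = 1}. [:-z, 1:])"
proof (rule monic_eq_prod_roots)
  show "finite {z::complex. z ^ n = 1}" using assms by (intro finite_roots_unity) auto
  show "poly (Polynomial.monom 1 n - 1) a = 0" if "a \<in> {z. z ^ n = 1}" for a :: complex
    using that by (simp add: poly_monom)
  have d: "degree (Polynomial.monom 1 n - 1 :: complex poly) = n"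
  proof -
    have "degree (Polynomial.monom 1 n + (- 1) :: complex poly) = n"
      using assms by (subst degree_add_eq_left) (auto simp: degree_monom_eq)
    thus ?thesis by simp
  qed
  show "lead_coeff (Polynomial.monom 1 n - 1 :: complex poly) = 1"
    using assms by (simp add: d coeff_monom)
  show "degree (Polynomial.monom 1 n - 1 :: complex poly) = card {z::complex. z ^ n = 1}"
    using assms by (simp add: d card_roots_unity_eq)
qed


lemma cis_mod:
  assumes "d > 0"
  shows "cis (2 * pi * real k / real d) = cis (2 * pi * real (k mod d) / real d)"
proof -
  have "real k = real (d * (k div d) + k mod d)" by simp
  also have "\<dots> = real d * real (k div d) + real (k mod d)" by (simp only: of_nat_add of_nat_mult)
  finally have e: "real k = real d * real (k div d) + real (k mod d)" .
  have "2 * pi * real k / real d = 2 * pi * real (k div d) + 2 * pi * real (k mod d) / real d"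
    using assms unfolding e by (simp add: field_simps)
  hence "cis (2 * pi * real k / real d) = cis (2 * pi * real (k div d) + 2 * pi * real (k mod d) / real d)"
    by (simp only:)
  also have "\<dots> = cis (2 * pi * real (k div d)) * cis (2 * pi * real (k mod d) / real d)"
    by (simp only: cis_mult)
  also have "cis (2 * pi * real (k div d)) = 1"
    by (rule cis_multiple_2pi) (simp add: Ints_of_nat)
  finally show ?thesis by simp
qed
lemma cis_eq_1_iff:
  assumes "d > 0"
  shows "cis (2 * pi * real k / real d) = 1 \<longleftrightarrow> d dvd k"
proof
  assume h: "cis (2 * pi * real k / real d) = 1"
  have "cis (2 * pi * real (k mod d) / real d) = cis (2 * pi * real 0 / real d)"
    using h cis_mod[OF assms, of k] by simp
  moreover have "k mod d \<in> {..<d}" "0 \<in> {..<d}" using assms by auto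
  ultimately have "k mod d = 0"
    using Complex.bij_betw_roots_unity[OF assms] unfolding bij_betw_def inj_on_def by blast
  thus "d dvd k" by auto
next
  assume "d dvd k"
  then obtain c where "k = d * c" by (elim dvdE)
  hence "2 * pi * real k / real d = 2 * pi * real c" using assms by simp
  thus "cis (2 * pi * real k / real d) = 1" by (simp add: Ints_of_nat)
qed

lemma cis_pow_root:
  "cis (2 * pi * real j / real d) ^ e = cis (2 * pi * real (j * e) / real d)"
proof -
  have "cis (2 * pi * real j / real d) ^ e = cis (real e * (2 * pi * real j / real d))"
    by (rule Complex.DeMoivre)
  also have "real e * (2 * pi * real j / real d) = 2 * pi * real (j * e) / real d"
    by simp
  finally show ?thesis .
qed

definition Prim :: "nat \<Rightarrow> complex set" where
  "Prim d = {z. z ^ d = 1 \<and> (\<forall>e. 0 < e \<longrightarrow> e < d \<longrightarrow> z ^ e \<noteq> 1)}"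


lemma bij_cyc:
  assumes "d > 0"
  shows "bij_betw (\<lambda>j. cis (2 * pi * real j / real d)) {j\<in>{1..d}. coprime j d} (Prim d)"
  unfolding bij_betw_def
proof (intro conjI)
  show "inj_on (\<lambda>j. cis (2 * pi * real j / real d)) {j\<in>{1..d}. coprime j d}"
  proof (rule inj_onI)
    fix i j assume i: "i \<in> {j\<in>{1..d}. coprime j d}" and j: "j \<in> {j\<in>{1..d}. coprime j d}"
      and eq: "cis (2 * pi * real i / real d) = cis (2 * pi * real j / real d)"
    have "cis (2 * pi * real (i mod d) / real d) = cis (2 * pi * real (j mod d) / real d)"
      using eq cis_mod[OF assms, of i] cis_mod[OF assms, of j] by simp
    moreover have "i mod d \<in> {..<d}" "j mod d \<in> {..<d}" using assms by auto
    ultimately have m: "i mod d = j mod d"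
      using Complex.bij_betw_roots_unity[OF assms] unfolding bij_betw_def inj_on_def by blast
    show "i = j"
    proof (cases "i = d \<or> j = d")
      case True
      thus ?thesis using m i j by (auto simp: le_less)
    next
      case False
      hence "i < d" "j < d" using i j by auto
      thus ?thesis using m by simp
    qed
  qed
next
  show "(\<lambda>j. cis (2 * pi * real j / real d)) ` {j\<in>{1..d}. coprime j d} = Prim d"
  proof (intro equalityI subsetI)
    fix z assume "z \<in> (\<lambda>j. cis (2 * pi * real j / real d)) ` {j\<in>{1..d}. coprime j d}"
    then obtain j where j: "j \<in> {1..d}" "coprime j d" and z: "z = cis (2 * pi * real j / real d)" by auto
    have "z ^ d = 1" unfolding z cis_pow_root using assms by (subst cis_eq_1_iff) auto
    moreover have "z ^ e \<noteq> 1" if "0 < e" "e < d" for e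
    proof
      assume "z ^ e = 1"
      hence "d dvd j * e" unfolding z cis_pow_root using assms by (subst (asm) cis_eq_1_iff) auto
      moreover have "coprime d j" using j(2) by (simp add: ac_simps)
      ultimately have "d dvd e" using coprime_dvd_mult_right_iff by blast
      thus False using that by (auto dest: dvd_imp_le)
    qed
    ultimately show "z \<in> Prim d" by (auto simp: Prim_def)
  next
    fix z assume z: "z \<in> Prim d"
    hence "z \<in> {z. z ^ d = 1}" by (auto simp: Prim_def)
    then obtain k where k: "k < d" "z = cis (2 * pi * real k / real d)"
      using Complex.bij_betw_roots_unity[OF assms] unfolding bij_betw_def by auto
    define g where "g = gcd k d"
    have g0: "g > 0" using assms by (simp add: g_def)
    define e where "e = d div g"
    have gd: "g dvd d" "g dvd k" by (auto simp: g_def)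
    have e0: "e > 0" using gd assms g0 by (simp add: e_def div_greater_zero_iff dvd_imp_le)
    have "d dvd k * e"
    proof -
      obtain k' where "k = g * k'" using gd by (elim dvdE)
      moreover have "d = g * e" using gd(1) by (simp add: e_def)
      ultimately have "k * e = k' * d" by (simp only: mult_ac)
      thus ?thesis by (simp only: dvd_triv_right)
    qed
    hence "z ^ e = 1" unfolding k cis_pow_root using assms by (subst cis_eq_1_iff) auto
    hence "\<not> e < d" using z e0 by (auto simp: Prim_def)
    have "g = 1"
    proof (rule ccontr)
      assume "g \<noteq> 1"
      hence "1 < g" using g0 by simp
      hence "d div g < d" using assms by (rule div_less_dividend)
      thus False using \<open>\<not> e < d\<close> by (simp add: e_def)
    qed
    have gk: "gcd k d = 1" using \<open>g = 1\<close> unfolding g_def .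
    define j where "j = (if k = 0 then d else k)"
    have "j \<in> {1..d} \<and> coprime j d \<and> z = cis (2 * pi * real j / real d)"
    proof (cases "k = 0")
      case True
      have "d = 1" using gk True by simp
      thus ?thesis using True k by (simp add: j_def)
    next
      case False
      have "coprime k d" using gk coprime_iff_gcd_eq_1 by blast
      thus ?thesis using False k by (simp add: j_def)
    qed
    thus "z \<in> (\<lambda>j. cis (2 * pi * real j / real d)) ` {j\<in>{1..d}. coprime j d}" by blast
  qed
qed

lemma cyclotomic_Prim:
  assumes "d > 0"
  shows "cyclotomic d = (\<Prod>z\<in>Prim d. [:-z, 1:])"
  unfolding cyclotomic_def by (rule prod.reindex_bij_betw[OF bij_cyc[OF assms]])


lemma Prim_disjoint:
  assumes "d > 0" "d' > 0" "d \<noteq> d'"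
  shows "Prim d \<inter> Prim d' = {}"
proof -
  have "False" if "z \<in> Prim d" "z \<in> Prim d'" "d < d'" "d > 0" for z d d'
    using that by (auto simp: Prim_def)
  thus ?thesis using assms by (cases "d < d'") (auto simp: Prim_def)
qed

lemma finite_Prim: "d > 0 \<Longrightarrow> finite (Prim d)"
  by (rule finite_subset[of _ "{z. z ^ d = 1}"]) (auto simp: Prim_def intro: finite_roots_unity)


lemma roots_unity_partition:
  assumes "n > 0"
  shows "{z::complex. z ^ n = 1} = (\<Union>d\<in>{d. d dvd n}. Prim d)"
proof (intro equalityI subsetI)
  fix z :: complex assume "z \<in> {z. z ^ n = 1}"
  hence zn: "z ^ n = 1" by simp
  define d where "d = (LEAST e. 0 < e \<and> z ^ e = 1)"
  have ex: "0 < n \<and> z ^ n = 1" using assms zn by simp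
  have d: "0 < d \<and> z ^ d = 1" unfolding d_def by (rule LeastI[of _ n]) (rule ex)
  have dmin: "\<And>e. 0 < e \<and> z ^ e = 1 \<Longrightarrow> d \<le> e" unfolding d_def by (rule Least_le)
  have "z ^ (n mod d) = 1"
  proof -
    have "z ^ n = z ^ (d * (n div d) + n mod d)" by simp
    also have "\<dots> = (z ^ d) ^ (n div d) * z ^ (n mod d)" by (simp only: power_add power_mult)
    finally show ?thesis using d zn by simp
  qed
  hence "n mod d = 0"
  proof (rule contrapos_pp)
    assume "n mod d \<noteq> 0"
    hence "d \<le> n mod d" if "z ^ (n mod d) = 1" using dmin that by simp
    moreover have "n mod d < d" using d by simp
    ultimately show "z ^ (n mod d) \<noteq> 1" by linarith
  qed
  hence "d dvd n" by auto
  moreover have "\<forall>e. 0 < e \<longrightarrow> e < d \<longrightarrow> z ^ e \<noteq> 1"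
  proof (intro allI impI notI)
    fix e assume "0 < e" "e < d" "z ^ e = 1"
    hence "d \<le> e" using dmin by simp
    thus False using \<open>e < d\<close> by simp
  qed
  hence "z \<in> Prim d" unfolding Prim_def using d by simp
  ultimately show "z \<in> (\<Union>d\<in>{d. d dvd n}. Prim d)" by blast
next
  fix z assume "z \<in> (\<Union>d\<in>{d. d dvd n}. Prim d)"
  then obtain d where "d dvd n" "z \<in> Prim d" by blast
  then obtain c where "n = d * c" "z ^ d = 1" by (auto simp: Prim_def elim: dvdE)
  thus "z \<in> {z. z ^ n = 1}" by (simp add: power_mult)
qed


lemma xn_minus_1_cyclotomic:
  assumes "n > 0"
  shows "(Polynomial.monom 1 n - 1 :: complex poly) = (\<Prod>d\<in>{d. d dvd n}. cyclotomic d)"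
proof -
  have fin: "finite {d. d dvd n}" using assms by simp
  have pos: "\<And>d. d \<in> {d. d dvd n} \<Longrightarrow> d > 0" using assms by (auto intro: Nat.gr0I)
  have "(Polynomial.monom 1 n - 1 :: complex poly) = (\<Prod>z\<in>{z. z ^ n = 1}. [:-z, 1:])"
    by (rule xn_minus_1[OF assms])
  also have "\<dots> = (\<Prod>z\<in>(\<Union>d\<in>{d. d dvd n}. Prim d). [:-z, 1:])"
    by (simp only: roots_unity_partition[OF assms])
  also have "\<dots> = (\<Prod>d\<in>{d. d dvd n}. (\<Prod>z\<in>Prim d. [:-z, 1:]))"
    by (rule prod.UNION_disjoint) (use fin pos finite_Prim Prim_disjoint in auto)
  also have "\<dots> = (\<Prod>d\<in>{d. d dvd n}. cyclotomic d)"
    by (rule prod.cong) (auto simp: cyclotomic_Prim pos)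
  finally show ?thesis .
qed

lemma lead_cyclotomic: "lead_coeff (cyclotomic n) = 1"
  unfolding cyclotomic_def by (simp add: lead_coeff_prod)

lemma intpoly_xn: "intpoly (Polynomial.monom 1 n - 1 :: complex poly)"
  unfolding intpoly_def by (auto simp: coeff_monom)

lemma intpoly_cyclotomic: "intpoly (cyclotomic n)"
proof (induction n rule: less_induct)
  case (less n)
  show ?case
  proof (cases "n = 0")
    case True
    thus ?thesis by (simp add: cyclotomic_def)
  next
    case False
    hence n0: "n > 0" by simp
    have fin: "finite {d. d dvd n}" using n0 by simp
    have "(Polynomial.monom 1 n - 1 :: complex poly) = cyclotomic n * (\<Prod>d\<in>{d. d dvd n} - {n}. cyclotomic d)"
      unfolding xn_minus_1_cyclotomic[OF n0] using fin by (subst prod.remove[of _ n]) auto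
    hence eq: "(Polynomial.monom 1 n - 1 :: complex poly) = (\<Prod>d\<in>{d. d dvd n} - {n}. cyclotomic d) * cyclotomic n"
      by (simp add: mult.commute)
    show ?thesis
    proof (rule intpoly_div[OF eq intpoly_xn])
      show "intpoly (\<Prod>d\<in>{d. d dvd n} - {n}. cyclotomic d)"
      proof (rule intpoly_prod)
        fix d assume "d \<in> {d. d dvd n} - {n}"
        hence "d < n" using n0 by (auto dest: dvd_imp_le)
        thus "intpoly (cyclotomic d)" by (rule less.IH)
      qed
      show "lead_coeff (\<Prod>d\<in>{d. d dvd n} - {n}. cyclotomic d) = 1"
        by (simp add: lead_coeff_prod lead_cyclotomic)
    qed
  qed
qed


definition ratpoly :: "complex poly \<Rightarrow> bool" where
  "ratpoly P \<longleftrightarrow> (\<forall>i. poly.coeff P i \<in> \<rat>)"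

lemma intpoly_ratpoly: "intpoly P \<Longrightarrow> ratpoly P"
  unfolding intpoly_def ratpoly_def using Ints_subset_Rats by blast

lemma ratpoly_map: "ratpoly (map_poly of_rat p)"
  by (auto simp: ratpoly_def coeff_map_poly)

context
  fixes K :: "complex set"
  assumes K: "subfield_C K"
begin

lemma K0[simp]: "0 \<in> K" and K1[simp]: "1 \<in> K"
  using K by (auto simp: subfield_C_def)

lemma Kadd[intro]: "x \<in> K \<Longrightarrow> y \<in> K \<Longrightarrow> x + y \<in> K"
  and Kmult[intro]: "x \<in> K \<Longrightarrow> y \<in> K \<Longrightarrow> x * y \<in> K"
  and Kuminus[intro]: "x \<in> K \<Longrightarrow> - x \<in> K"
  using K by (auto simp: subfield_C_def)

lemma Kinverse[intro]: "x \<in> K \<Longrightarrow> inverse x \<in> K"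
  using K by (cases "x = 0") (auto simp: subfield_C_def)

lemma Kdiff[intro]: "x \<in> K \<Longrightarrow> y \<in> K \<Longrightarrow> x - y \<in> K"
  using Kadd[of x "-y"] Kuminus[of y] by simp

lemma Kdivide[intro]: "x \<in> K \<Longrightarrow> y \<in> K \<Longrightarrow> x / y \<in> K"
  using Kmult[of x "inverse y"] Kinverse[of y] by (simp add: divide_inverse)

lemma Kpower[intro]: "x \<in> K \<Longrightarrow> x ^ n \<in> K"
  by (induction n) auto

lemma Ksum[intro]: "(\<And>i. i \<in> I \<Longrightarrow> f i \<in> K) \<Longrightarrow> sum f I \<in> K"
  by (induction I rule: infinite_finite_induct) auto

lemma Kprod[intro]: "(\<And>i. i \<in> I \<Longrightarrow> f i \<in> K) \<Longrightarrow> prod f I \<in> K"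
  by (induction I rule: infinite_finite_induct) auto

lemma Knat[intro]: "of_nat n \<in> K"
  by (induction n) auto

lemma Kint[intro]: "of_int n \<in> K"
proof (cases "n \<ge> 0")
  case True
  then obtain m where "n = int m" by (metis nonneg_eq_int)
  thus ?thesis by auto
next
  case False
  then obtain m where "n = - int m" by (metis linorder_not_le less_imp_le neg_0_le_iff_le nonneg_eq_int minus_minus)
  thus ?thesis by auto
qed

lemma Krat[intro]: "of_rat q \<in> K"
proof -
  obtain a b where "q = Fract a b" "b \<noteq> 0" by (cases q) auto
  hence "(of_rat q :: complex) = of_int a / of_int b" by (simp add: of_rat_rat)
  thus ?thesis by auto
qed

lemma KRats[intro]: "c \<in> \<rat> \<Longrightarrow> c \<in> K"
  by (auto elim!: Rats_cases)

lemma Kpoly[intro]: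
  assumes "ratpoly P" "x \<in> K"
  shows "poly P x \<in> K"
  using assms unfolding poly_altdef ratpoly_def by (intro Ksum Kmult) (auto intro: KRats Kpower)

context
  fixes \<sigma> assumes \<sigma>: "\<sigma> \<in> embeddings K"
begin

lemma s1[simp]: "\<sigma> 1 = 1"
  and sadd: "x \<in> K \<Longrightarrow> y \<in> K \<Longrightarrow> \<sigma> (x + y) = \<sigma> x + \<sigma> y"
  and smult: "x \<in> K \<Longrightarrow> y \<in> K \<Longrightarrow> \<sigma> (x * y) = \<sigma> x * \<sigma> y"
  using \<sigma> by (auto simp: embeddings_def)

lemma sout: "x \<notin> K \<Longrightarrow> \<sigma> x = undefined"
  using \<sigma> by (auto simp: embeddings_def PiE_def extensional_def)

lemma s0[simp]: "\<sigma> 0 = 0"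
  using sadd[of 0 0] by simp

lemma suminus: "x \<in> K \<Longrightarrow> \<sigma> (- x) = - \<sigma> x"
proof -
  assume x: "x \<in> K"
  have "\<sigma> x + \<sigma> (- x) = 0" using sadd[of x "-x"] x by (simp add: Kuminus)
  thus ?thesis by (simp add: add_eq_0_iff)
qed

lemma sdiff: "x \<in> K \<Longrightarrow> y \<in> K \<Longrightarrow> \<sigma> (x - y) = \<sigma> x - \<sigma> y"
  using sadd[of x "-y"] suminus[of y] by (simp add: Kuminus)

lemma spower: "x \<in> K \<Longrightarrow> \<sigma> (x ^ n) = \<sigma> x ^ n"
  by (induction n) (auto simp: smult Kpower)

lemma ssum: "(\<And>i. i \<in> I \<Longrightarrow> f i \<in> K) \<Longrightarrow> \<sigma> (sum f I) = (\<Sum>i\<in>I. \<sigma> (f i))"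
  by (induction I rule: infinite_finite_induct) (auto simp: sadd Ksum)

lemma sprod: "(\<And>i. i \<in> I \<Longrightarrow> f i \<in> K) \<Longrightarrow> \<sigma> (prod f I) = (\<Prod>i\<in>I. \<sigma> (f i))"
  by (induction I rule: infinite_finite_induct) (auto simp: smult Kprod)

lemma snat[simp]: "\<sigma> (of_nat n) = of_nat n"
  by (induction n) (auto simp: sadd Knat)

lemma sint[simp]: "\<sigma> (of_int n) = of_int n"
proof (cases "n \<ge> 0")
  case True
  then obtain m where "n = int m" by (metis nonneg_eq_int)
  thus ?thesis by simp
next
  case False
  then obtain m where "n = - int m" by (metis linorder_not_le less_imp_le neg_0_le_iff_le nonneg_eq_int minus_minus)
  thus ?thesis by (simp add: suminus Knat)
qed

lemma sinverse: "x \<in> K \<Longrightarrow> \<sigma> (inverse x) = inverse (\<sigma> x)"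
proof (cases "x = 0")
  case False
  assume x: "x \<in> K"
  have "\<sigma> x * \<sigma> (inverse x) = 1" using smult[OF x Kinverse[OF x]] False by simp
  thus ?thesis by (rule inverse_unique[symmetric])
qed simp

lemma sdivide: "x \<in> K \<Longrightarrow> y \<in> K \<Longrightarrow> \<sigma> (x / y) = \<sigma> x / \<sigma> y"
  by (simp add: divide_inverse smult Kinverse sinverse)

lemma srat[simp]: "\<sigma> (of_rat q) = of_rat q"
proof -
  obtain a b where "q = Fract a b" "b \<noteq> 0" by (cases q) auto
  hence "of_rat q = (of_int a / of_int b :: complex)" by (simp add: of_rat_rat)
  thus ?thesis by (simp add: sdivide Kint)
qed

lemma sRats: "c \<in> \<rat> \<Longrightarrow> \<sigma> c = c"
  by (auto elim!: Rats_cases)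

lemma spoly:
  assumes "ratpoly P" "x \<in> K"
  shows "\<sigma> (poly P x) = poly P (\<sigma> x)"
proof -
  have c: "poly.coeff P i \<in> \<rat>" for i using assms(1) by (simp add: ratpoly_def)
  have "\<sigma> (poly P x) = (\<Sum>i\<le>degree P. \<sigma> (poly.coeff P i * x ^ i))"
    unfolding poly_altdef using c assms(2) by (intro ssum Kmult) (auto intro: KRats Kpower)
  also have "\<dots> = (\<Sum>i\<le>degree P. poly.coeff P i * \<sigma> x ^ i)"
    using c assms(2) by (intro sum.cong refl) (simp add: smult KRats Kpower spower sRats)
  finally show ?thesis by (simp add: poly_altdef)
qed

lemma sconj:
  assumes "x \<in> K"
  shows "\<sigma> x \<in> conjugates x"
  unfolding conjugates_def
proof (safe)
  fix p :: "rat poly" assume "poly (map_poly of_rat p) x = 0"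
  hence "\<sigma> (poly (map_poly of_rat p) x) = 0" by simp
  thus "poly (map_poly of_rat p) (\<sigma> x) = 0" using spoly[OF ratpoly_map assms] by simp
qed

end
end

interpretation Qvs: vector_space "\<lambda>(c::rat) (x::complex). of_rat c * x"
  by unfold_locales (auto simp: algebra_simps of_rat_add of_rat_mult)

lemma ratpoly_monom: "c \<in> \<rat> \<Longrightarrow> ratpoly (Polynomial.monom c n)"
  by (auto simp: ratpoly_def coeff_monom)

lemma ratpoly_add: "ratpoly P \<Longrightarrow> ratpoly Q \<Longrightarrow> ratpoly (P + Q)"
  by (auto simp: ratpoly_def)

lemma ratpoly_diff: "ratpoly P \<Longrightarrow> ratpoly Q \<Longrightarrow> ratpoly (P - Q)"
  by (auto simp: ratpoly_def)

lemma ratpoly_0[simp]: "ratpoly 0" and ratpoly_1[simp]: "ratpoly 1"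
  by (auto simp: ratpoly_def coeff_1)

lemma ratpoly_sum: "(\<And>i. i \<in> I \<Longrightarrow> ratpoly (f i)) \<Longrightarrow> ratpoly (sum f I)"
  by (induction I rule: infinite_finite_induct) (auto intro: ratpoly_add)

lemma slin:
  assumes K: "subfield_C K" and \<sigma>: "\<sigma> \<in> embeddings K" and y: "\<And>b. b \<in> B \<Longrightarrow> y b \<in> K"
  shows "\<sigma> (\<Sum>b\<in>B. of_rat (c b) * y b) = (\<Sum>b\<in>B. of_rat (c b) * \<sigma> (y b))"
proof -
  have "\<sigma> (\<Sum>b\<in>B. of_rat (c b) * y b) = (\<Sum>b\<in>B. \<sigma> (of_rat (c b) * y b))"
    using y by (intro ssum[OF K \<sigma>]) (auto intro: Kmult[OF K] Krat[OF K])
  also have "\<dots> = (\<Sum>b\<in>B. of_rat (c b) * \<sigma> (y b))"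
    using y by (intro sum.cong refl) (simp add: smult[OF K \<sigma>] Krat[OF K] srat[OF K \<sigma>])
  finally show ?thesis .
qed

lemma ratpoly_mult: "ratpoly P \<Longrightarrow> ratpoly Q \<Longrightarrow> ratpoly (P * Q)"
  unfolding ratpoly_def coeff_mult by (auto intro!: Rats_sum Rats_mult)

lemma ratpoly_smult: "c \<in> \<rat> \<Longrightarrow> ratpoly Q \<Longrightarrow> ratpoly (Polynomial.smult c Q)"
  unfolding ratpoly_def by auto

locale nf =
  fixes K :: "complex set" and m :: nat and B :: "complex set"
  assumes K: "subfield_C K" and finB: "finite B" and cardB: "card B = m" and BK: "B \<subseteq> K"
    and Bspan: "\<forall>x\<in>K. \<exists>c :: complex \<Rightarrow> rat. x = (\<Sum>b\<in>B. of_rat (c b) * b)"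
begin

lemma K_span: "x \<in> K \<Longrightarrow> x \<in> Qvs.span B"
proof -
  assume "x \<in> K"
  then obtain c where c: "x = (\<Sum>b\<in>B. of_rat (c b) * b)" using Bspan by blast
  show ?thesis unfolding c
    by (intro Qvs.span_sum Qvs.span_scale[where c = "c _", simplified] Qvs.span_base) auto
qed

lemma alg_K:
  assumes x: "x \<in> K"
  shows "\<exists>P. ratpoly P \<and> P \<noteq> 0 \<and> poly P x = 0"
proof (cases "inj_on (\<lambda>i. x ^ i) {..m}")
  case True
  define S where "S = (\<lambda>i. x ^ i) ` {..m}"
  have cardS: "card S = Suc m" unfolding S_def using True by (simp add: card_image)
  have finS: "finite S" unfolding S_def by simp
  have SB: "S \<subseteq> Qvs.span B" unfolding S_def using x K_span Kpower[OF K] by auto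
  have "\<not> Qvs.independent S"
  proof
    assume "Qvs.independent S"
    from Qvs.independent_span_bound[OF finB this SB] have "card S \<le> card B" by simp
    thus False using cardS cardB by simp
  qed
  hence "\<exists>c. (\<exists>v\<in>S. c v \<noteq> 0) \<and> (\<Sum>v\<in>S. of_rat (c v) * v) = 0"
    using Qvs.dependent_finite[OF finS] by (simp only: not_not)
  then obtain c where c': "(\<exists>v\<in>S. c v \<noteq> 0) \<and> (\<Sum>v\<in>S. of_rat (c v) * v) = 0" ..
  note c = c'[THEN conjunct1] c'[THEN conjunct2]
  define P where "P = (\<Sum>i\<le>m. Polynomial.monom (of_rat (c (x ^ i)) :: complex) i)"
  have cP: "poly.coeff P j = (if j \<le> m then of_rat (c (x ^ j)) else 0)" for j
    unfolding P_def by (simp add: coeff_sum coeff_monom)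
  have "ratpoly P" unfolding P_def by (intro ratpoly_sum ratpoly_monom) auto
  moreover have "P \<noteq> 0"
  proof -
    obtain i where "i \<le> m" "c (x ^ i) \<noteq> 0" using c(1) unfolding S_def by auto
    hence "poly.coeff P i \<noteq> 0" using cP by simp
    thus ?thesis by auto
  qed
  moreover have "poly P x = 0"
  proof -
    have "poly P x = (\<Sum>i\<le>m. of_rat (c (x ^ i)) * x ^ i)"
      unfolding P_def by (simp add: poly_sum poly_monom)
    also have "\<dots> = (\<Sum>v\<in>S. of_rat (c v) * v)"
      unfolding S_def by (subst sum.reindex[OF True]) simp
    finally show ?thesis using c(2) by simp
  qed
  ultimately show ?thesis by blast
next
  case False
  then obtain i j where ij: "i \<le> m" "j \<le> m" "i \<noteq> j" "x ^ i = x ^ j"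
    unfolding inj_on_def by auto
  define P where "P = (Polynomial.monom 1 i - Polynomial.monom 1 j :: complex poly)"
  have "ratpoly P" unfolding P_def by (intro ratpoly_diff ratpoly_monom) auto
  moreover have "poly.coeff P i = 1" using ij unfolding P_def by (simp add: coeff_monom)
  hence "P \<noteq> 0" by auto
  moreover have "poly P x = 0" unfolding P_def using ij by (simp add: poly_monom)
  ultimately show ?thesis by blast
qed

lemma finite_embeddings: "finite (embeddings K)"
proof -
  have "\<forall>b\<in>B. \<exists>P. ratpoly P \<and> P \<noteq> 0 \<and> poly P b = 0" using alg_K BK by auto
  then obtain P where P: "\<And>b. b \<in> B \<Longrightarrow> ratpoly (P b) \<and> P b \<noteq> 0 \<and> poly (P b) b = 0"
    by metis
  define T where "T = PiE B (\<lambda>b. {z. poly (P b) z = 0})"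
  have finT: "finite T" unfolding T_def using finB P by (intro finite_PiE) (auto intro: poly_roots_finite)
  have sub: "(\<lambda>\<sigma>. restrict \<sigma> B) ` embeddings K \<subseteq> T"
  proof
    fix f assume "f \<in> (\<lambda>\<sigma>. restrict \<sigma> B) ` embeddings K"
    then obtain \<sigma> where \<sigma>: "\<sigma> \<in> embeddings K" and f: "f = restrict \<sigma> B" by auto
    have "poly (P b) (\<sigma> b) = 0" if "b \<in> B" for b
    proof -
      have "poly (P b) (\<sigma> b) = \<sigma> (poly (P b) b)"
        using spoly[OF K \<sigma>, of "P b" b] P[OF that] BK that by auto
      thus ?thesis using P[OF that] s0[OF K \<sigma>] by simp
    qed
    thus "f \<in> T" unfolding T_def f by auto
  qed
  have inj: "inj_on (\<lambda>\<sigma>. restrict \<sigma> B) (embeddings K)"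
  proof (rule inj_onI)
    fix \<sigma> \<tau> assume \<sigma>: "\<sigma> \<in> embeddings K" and \<tau>: "\<tau> \<in> embeddings K"
      and eq: "restrict \<sigma> B = restrict \<tau> B"
    have eqB: "\<sigma> b = \<tau> b" if "b \<in> B" for b using eq that by (metis restrict_apply')
    show "\<sigma> = \<tau>"
    proof
      fix x show "\<sigma> x = \<tau> x"
      proof (cases "x \<in> K")
        case True
        then obtain c where c: "x = (\<Sum>b\<in>B. of_rat (c b) * b)" using Bspan by blast
        have "\<sigma> x = (\<Sum>b\<in>B. of_rat (c b) * \<sigma> b)"
          unfolding c using BK by (intro slin[OF K \<sigma>]) auto
        also have "\<dots> = (\<Sum>b\<in>B. of_rat (c b) * \<tau> b)" using eqB by simp
        also have "\<dots> = \<tau> x"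
          unfolding c using BK by (intro slin[OF K \<tau>, symmetric]) auto
        finally show ?thesis .
      next
        case False
        thus ?thesis using sout[OF K \<sigma>] sout[OF K \<tau>] by simp
      qed
    qed
  qed
  show ?thesis using finite_imageD[OF finite_subset[OF sub finT] inj] .
qed

end

lemma ratpoly_den:
  assumes "ratpoly P"
  shows "\<exists>N::int. N > 0 \<and> intpoly (Polynomial.smult (of_int N) P)"
proof -
  have "\<forall>i. \<exists>r. poly.coeff P i = of_rat r" using assms unfolding ratpoly_def Rats_def by auto
  then obtain r where r: "\<And>i. poly.coeff P i = of_rat (r i)" by metis
  define den where "den i = snd (quotient_of (r i))" for i
  define num where "num i = fst (quotient_of (r i))" for i
  have den0: "den i > 0" for i unfolding den_def by (rule quotient_of_denom_pos')
  have rq: "r i = of_int (num i) / of_int (den i)" for i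
    unfolding num_def den_def by (rule quotient_of_div) simp
  define N where "N = (\<Prod>i\<le>degree P. den i)"
  have N0: "N > 0" unfolding N_def using den0 by (intro prod_pos) auto
  have "poly.coeff (Polynomial.smult (of_int N) P) i \<in> \<int>" for i
  proof (cases "i \<le> degree P")
    case True
    have "N = den i * (\<Prod>j\<in>{..degree P} - {i}. den j)"
      unfolding N_def using True by (subst prod.remove[of _ i]) auto
    hence "poly.coeff (Polynomial.smult (of_int N) P) i
        = of_int (\<Prod>j\<in>{..degree P} - {i}. den j) * (of_int (den i) * of_rat (r i))"
      by (simp add: r)
    also have "of_int (den i) * of_rat (r i) = (of_int (num i) :: complex)"
      using den0[of i] by (simp add: rq of_rat_divide)
    finally have e: "poly.coeff (Polynomial.smult (of_int N) P) i
        = of_int (\<Prod>j\<in>{..degree P} - {i}. den j) * (of_int (num i) :: complex)" .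
    show ?thesis unfolding e by (rule Ints_mult[OF Ints_of_int Ints_of_int])
  next
    case False
    thus ?thesis by (simp add: coeff_eq_0)
  qed
  thus ?thesis using N0 unfolding intpoly_def by blast
qed

lemma map_poly_of_int_inj:
  "map_poly (of_int :: int \<Rightarrow> complex) a = map_poly of_int b \<Longrightarrow> a = b"
  by (rule poly_eqI) (metis coeff_map_poly of_int_0 of_int_eq_iff)

lemma gauss_monic:
  assumes eq: "P = Q * S" and P: "intpoly P" "lead_coeff P = 1"
    and Q: "ratpoly Q" "lead_coeff Q = 1" and S: "ratpoly S" "lead_coeff S = 1"
  shows "intpoly Q"
proof -
  obtain N where N: "N > 0" "intpoly (Polynomial.smult (of_int N) Q)" using ratpoly_den[OF Q(1)] by blast
  obtain M where M: "M > 0" "intpoly (Polynomial.smult (of_int M) S)" using ratpoly_den[OF S(1)] by blast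
  obtain Qi where Qi: "Polynomial.smult (of_int N) Q = map_poly of_int Qi"
    using N(2) unfolding intpoly_def by (metis intpolyE)
  obtain Si where Si: "Polynomial.smult (of_int M) S = map_poly of_int Si"
    using M(2) unfolding intpoly_def by (metis intpolyE)
  obtain Pi where Pi: "P = map_poly of_int Pi"
    using P(1) unfolding intpoly_def by (metis intpolyE)
  have "map_poly of_int (Qi * Si) = (map_poly of_int (Polynomial.smult (N * M) Pi) :: complex poly)"
    unfolding map_poly_of_int_mult Qi[symmetric] Si[symmetric]
    by (subst map_poly_smult) (auto simp: eq Pi[symmetric] ac_simps)
  hence QS: "Qi * Si = Polynomial.smult (N * M) Pi" by (rule map_poly_of_int_inj)
  have degPi: "degree P = degree Pi" unfolding Pi by (rule degree_map_poly) auto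
  have "of_int (lead_coeff Pi) = (lead_coeff P :: complex)"
    by (simp add: Pi degPi[unfolded Pi] coeff_map_poly)
  hence lPi: "lead_coeff Pi = 1" using P(2) by simp
  have cPi: "content Pi = 1"
  proof -
    have a: "\<bar>content Pi\<bar> = 1" using content_dvd_coeff[of Pi "degree Pi"] lPi by simp
    have b: "\<bar>content Pi\<bar> = content Pi" using normalize_content[of Pi] by (simp only: normalize_int_def)
    show ?thesis using a b by linarith
  qed
  have lead_int: "lead_coeff Xi = c"
    if "Polynomial.smult (of_int c) X = map_poly of_int Xi" "lead_coeff X = 1" "c > 0" for X :: "complex poly" and Xi c
  proof -
    have "degree (Polynomial.smult (of_int c) X) = degree X" using that(3) by simp
    moreover have "degree (map_poly (of_int :: int \<Rightarrow> complex) Xi) = degree Xi" by (rule degree_map_poly) auto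
    ultimately have d: "degree X = degree Xi" using that(1) by simp
    have "poly.coeff (Polynomial.smult (of_int c) X) (degree X) = of_int c" using that(2) by simp
    also have "poly.coeff (Polynomial.smult (of_int c) X) (degree X) = of_int (lead_coeff Xi)"
      unfolding that(1) d by (simp add: coeff_map_poly)
    finally show ?thesis by simp
  qed
  have lQ: "lead_coeff Qi = N" by (rule lead_int[OF Qi Q(2) N(1)])
  have lS: "lead_coeff Si = M" by (rule lead_int[OF Si S(2) M(1)])
  define cq where "cq = content Qi"
  define cs where "cs = content Si"
  have cqcs: "cq * cs = N * M"
  proof -
    have "cq * cs = content (Polynomial.smult (N * M) Pi)" unfolding cq_def cs_def QS[symmetric] by (simp add: content_mult)
    also have "\<dots> = N * M" using N M cPi by (simp add: abs_mult)
    finally show ?thesis .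
  qed
  have cnn: "content X \<ge> 0" for X :: "int poly"
  proof -
    have "\<bar>content X\<bar> = content X" using normalize_content[of X] by (simp only: normalize_int_def)
    thus ?thesis by linarith
  qed
  have cq0: "cq \<ge> 0" unfolding cq_def by (rule cnn)
  have cs0: "cs \<ge> 0" unfolding cs_def by (rule cnn)
  have "cq dvd N" unfolding cq_def using content_dvd_coeff[of Qi "degree Qi"] lQ by simp
  hence cqN: "cq \<le> N" using N(1) by (rule zdvd_imp_le)
  have "cs dvd M" unfolding cs_def using content_dvd_coeff[of Si "degree Si"] lS by simp
  hence csM: "cs \<le> M" using M(1) by (rule zdvd_imp_le)
  have "cq = N"
  proof (rule ccontr)
    assume "cq \<noteq> N"
    hence "cq < N" using cqN by simp
    have "cq * cs \<le> cq * M" using csM cq0 by (rule mult_left_mono)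
    also have "\<dots> < N * M" using \<open>cq < N\<close> M(1) by (rule mult_strict_right_mono)
    finally show False using cqcs by simp
  qed
  show ?thesis unfolding intpoly_def
  proof
    fix i
    have "N dvd poly.coeff Qi i" using content_dvd_coeff[of Qi i] \<open>cq = N\<close> unfolding cq_def by simp
    then obtain k where k: "poly.coeff Qi i = N * k" by (elim dvdE)
    have "of_int N * poly.coeff Q i = (of_int (poly.coeff Qi i) :: complex)"
      using arg_cong[OF Qi, of "\<lambda>p. poly.coeff p i"] by (simp add: coeff_map_poly)
    hence "of_int N * poly.coeff Q i = of_int N * (of_int k :: complex)" by (simp add: k)
    hence "poly.coeff Q i = of_int k" using N(1) by simp
    thus "poly.coeff Q i \<in> \<int>" by simp
  qed
qed


lemma map_poly_of_rat_mult:
  "map_poly (of_rat :: rat \<Rightarrow> complex) (p * q) = map_poly of_rat p * map_poly of_rat q"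
  by (rule poly_eqI) (simp add: coeff_map_poly coeff_mult of_rat_sum of_rat_mult)

lemma map_poly_of_rat_add:
  "map_poly (of_rat :: rat \<Rightarrow> complex) (p + q) = map_poly of_rat p + map_poly of_rat q"
  by (rule poly_eqI) (simp add: coeff_map_poly of_rat_add)

lemma degree_map_of_rat: "degree (map_poly (of_rat :: rat \<Rightarrow> complex) p) = degree p"
  by (rule degree_map_poly) auto

lemma map_of_rat_eq_0: "map_poly (of_rat :: rat \<Rightarrow> complex) p = 0 \<longleftrightarrow> p = 0"
  by (auto simp: poly_eq_iff coeff_map_poly)

lemma minpoly_exists:
  fixes u :: complex
  assumes "algebraic u"
  shows "\<exists>q. ratpoly q \<and> lead_coeff q = 1 \<and> poly q u = 0 \<and>
           (\<forall>P. ratpoly P \<and> P \<noteq> 0 \<and> poly P u = 0 \<longrightarrow> degree q \<le> degree P)"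
proof -
  define MS where "MS = {P. ratpoly P \<and> P \<noteq> 0 \<and> poly P u = (0::complex)}"
  obtain p where p: "\<And>i. poly.coeff p i \<in> \<int>" "p \<noteq> 0" "poly p u = 0" using algebraicE[OF assms] by blast
  have "p \<in> MS" unfolding MS_def ratpoly_def using p Ints_subset_Rats by auto
  define d where "d = (LEAST n. \<exists>P\<in>MS. degree P = n)"
  have "\<exists>P\<in>MS. degree P = d" unfolding d_def by (rule LeastI[of _ "degree p"]) (use \<open>p \<in> MS\<close> in blast)
  then obtain q0 where q0: "q0 \<in> MS" "degree q0 = d" by blast
  have dmin: "d \<le> degree P" if "P \<in> MS" for P unfolding d_def by (rule Least_le) (use that in blast)
  define q where "q = Polynomial.smult (inverse (lead_coeff q0)) q0"
  have l0: "lead_coeff q0 \<noteq> 0" using q0 by (auto simp: MS_def)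
  have lq: "lead_coeff q = 1" unfolding q_def using l0 by simp
  have "lead_coeff q0 \<in> \<rat>" using q0 by (auto simp: MS_def ratpoly_def)
  hence "ratpoly q" unfolding q_def using q0 by (intro ratpoly_smult) (auto simp: MS_def)
  moreover have "poly q u = 0" unfolding q_def using q0 by (auto simp: MS_def)
  moreover have "degree q = d" unfolding q_def using q0 l0 by simp
  ultimately show ?thesis using lq dmin unfolding MS_def by auto
qed

lemma minpoly_dvd:
  fixes u :: complex
  assumes q: "ratpoly q" "lead_coeff q = 1" "poly q u = 0"
    "\<forall>P. ratpoly P \<and> P \<noteq> 0 \<and> poly P u = 0 \<longrightarrow> degree q \<le> degree P"
    and R: "ratpoly R" "poly R u = 0"
  shows "\<exists>S. ratpoly S \<and> R = q * S"
proof -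
  obtain r where r: "R = map_poly of_rat r" using R(1) unfolding ratpoly_def by (metis ratpolyE)
  obtain q' where q': "q = map_poly of_rat q'" using q(1) unfolding ratpoly_def by (metis ratpolyE)
  have q'0: "q' \<noteq> 0" using q(2) q' by auto
  define S where "S = map_poly (of_rat :: rat \<Rightarrow> complex) (r div q')"
  define T where "T = map_poly (of_rat :: rat \<Rightarrow> complex) (r mod q')"
  have eq: "R = q * S + T" unfolding S_def T_def r q'
    by (simp only: map_poly_of_rat_mult[symmetric] map_poly_of_rat_add[symmetric] mult_div_mod_eq)
  have "poly T u = 0" using eq R(2) q(3) by simp
  moreover have "ratpoly T" unfolding T_def by (rule ratpoly_map)
  moreover have "T = 0 \<or> degree T < degree q"
    using degree_mod_less[OF q'0, of r] unfolding T_def q' degree_map_of_rat map_of_rat_eq_0 .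
  ultimately have "T = 0" using q(4) by force
  thus ?thesis using eq ratpoly_map unfolding S_def by auto
qed


locale minpoly_ctx =
  fixes u :: complex and q :: "complex poly"
  assumes ai: "algebraic_int u" and u0: "u \<noteq> 0"
    and q: "ratpoly q" "lead_coeff q = 1" "poly q u = 0"
    and qmin: "\<forall>P. ratpoly P \<and> P \<noteq> 0 \<and> poly P u = 0 \<longrightarrow> degree q \<le> degree P"
begin

lemma q_dvd: "ratpoly R \<Longrightarrow> poly R u = 0 \<Longrightarrow> \<exists>S. ratpoly S \<and> R = q * S"
  by (rule minpoly_dvd[OF q qmin])

lemma q_int: "intpoly q"
proof -
  obtain p where p: "poly (map_poly of_int p) u = 0" "lead_coeff p = 1"
    using ai unfolding algebraic_int_altdef_ipoly by blast
  define P where "P = (map_poly of_int p :: complex poly)"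
  have dP: "degree P = degree p" unfolding P_def by (rule degree_map_poly) auto
  have lP: "lead_coeff P = 1" using p(2) by (simp add: dP[unfolded P_def] P_def coeff_map_poly)
  have iP: "intpoly P" unfolding P_def by (rule intpoly_map)
  obtain S where S: "ratpoly S" "P = q * S" using q_dvd[OF intpoly_ratpoly[OF iP]] p(1) unfolding P_def by blast
  have "lead_coeff S = 1" using lP S(2) q(2) by (simp add: lead_coeff_mult)
  thus ?thesis by (rule gauss_monic[OF S(2) iP lP q(1) q(2) S(1)])
qed

lemma q_ne0: "q \<noteq> 0" using q(2) by auto

lemma q_deg: "degree q \<ge> 1"
proof (rule ccontr)
  assume "\<not> degree q \<ge> 1"
  hence "degree q = 0" by simp
  then obtain c where "q = [:c:]" by (elim degree_eq_zeroE)
  thus False using q(2,3) by simp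
qed

lemma q_coeff0: "poly.coeff q 0 \<noteq> 0"
proof
  assume c0: "poly.coeff q 0 = 0"
  obtain a q1 where aq: "q = pCons a q1" by (cases q) auto
  have a0: "a = 0" using c0 aq by simp
  have q10: "q1 \<noteq> 0" using q_ne0 aq a0 by auto
  have "poly q u = u * poly q1 u" using aq a0 by simp
  hence "poly q1 u = 0" using q(3) u0 by simp
  moreover have "ratpoly q1" using q(1) aq unfolding ratpoly_def
    by (metis coeff_pCons_Suc)
  ultimately have "degree q \<le> degree q1" using qmin q10 by blast
  moreover have "degree q = Suc (degree q1)" using aq q10 by (simp add: degree_pCons_eq)
  ultimately show False by simp
qed

lemma q_roots_conj:
  assumes "poly q z = 0"
  shows "z \<in> conjugates u"
  unfolding conjugates_def
proof safe
  fix p :: "rat poly" assume "poly (map_poly of_rat p) u = 0"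
  then obtain S where "map_poly of_rat p = q * S" using q_dvd[OF ratpoly_map] by blast
  thus "poly (map_poly of_rat p) z = 0" using assms by simp
qed

lemma q_big_root:
  assumes "\<forall>z\<in>conjugates u. cmod z \<noteq> 1"
  shows "\<exists>z. poly q z = 0 \<and> cmod z > 1"
proof (rule ccontr)
  assume H: "\<not> (\<exists>z. poly q z = 0 \<and> cmod z > 1)"
  obtain root where r: "Polynomial.smult (lead_coeff q) (\<Prod>i<degree q. [:-root i, 1:]) = q"
    by (rule complex_poly_decompose')
  hence r': "q = (\<Prod>i<degree q. [:-root i, 1:])" using q(2) by simp
  have rootq: "poly q (root i) = 0" if "i < degree q" for i
    using that by (subst r') (auto simp: poly_prod prod_zero_iff)
  have small: "cmod (root i) < 1" if "i < degree q" for i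
  proof -
    have "cmod (root i) \<noteq> 1" using assms q_roots_conj[OF rootq[OF that]] by blast
    moreover have "\<not> cmod (root i) > 1" using H rootq[OF that] by blast
    ultimately show ?thesis by simp
  qed
  have "poly q 0 = (\<Prod>i<degree q. - root i)" by (subst r') (simp add: poly_prod)
  hence "cmod (poly.coeff q 0) = (\<Prod>i<degree q. cmod (root i))"
    by (simp add: poly_0_coeff_0 prod_norm[symmetric])
  also have "\<dots> = cmod (root 0) * (\<Prod>i\<in>{..<degree q} - {0}. cmod (root i))"
    using q_deg by (subst prod.remove[of _ 0]) auto
  also have "\<dots> < 1"
  proof -
    have "(\<Prod>i\<in>{..<degree q} - {0}. cmod (root i)) \<le> 1"
      using small by (intro prod_le_1) (auto intro: less_imp_le)
    moreover have "cmod (root 0) < 1" using small q_deg by simp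
    ultimately show ?thesis
      by (meson le_less_trans mult_left_le norm_ge_zero)
  qed
  finally have lt: "cmod (poly.coeff q 0) < 1" .
  have "poly.coeff q 0 \<in> \<int>" using q_int by (simp add: intpoly_def)
  then obtain k where k: "poly.coeff q 0 = of_int k" by (elim Ints_cases)
  have "k \<noteq> 0" using q_coeff0 k by simp
  hence "cmod (poly.coeff q 0) \<ge> 1" unfolding k by (simp add: norm_of_int)
  thus False using lt by simp
qed

end

interpretation Cvs: vector_space "\<lambda>(c::complex) (f::complex \<Rightarrow> complex). (\<lambda>x. c * f x)"
  by unfold_locales (auto simp: fun_eq_iff algebra_simps)

lemma sum_fun_apply: "(\<Sum>i\<in>I. f i) x = (\<Sum>i\<in>I. f i x)"
  by (induction I rule: infinite_finite_induct) auto

definition lin :: "((complex \<Rightarrow> complex) \<Rightarrow> (complex \<Rightarrow> complex)) \<Rightarrow> bool" where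
  "lin T \<longleftrightarrow> (\<forall>f g. T (\<lambda>x. f x + g x) = (\<lambda>x. T f x + T g x)) \<and> (\<forall>c f. T (\<lambda>x. c * f x) = (\<lambda>x. c * T f x))"

lemma lin_add: "lin T \<Longrightarrow> T (\<lambda>x. f x + g x) = (\<lambda>x. T f x + T g x)"
  and lin_scale: "lin T \<Longrightarrow> T (\<lambda>x. c * f x) = (\<lambda>x. c * T f x)"
  by (auto simp: lin_def)

lemma lin_zero: "lin T \<Longrightarrow> T (\<lambda>x. 0) = (\<lambda>x. 0)"
  using lin_scale[of T 0 "\<lambda>x. 0"] by simp

lemma lin_comb: "lin T \<Longrightarrow> T (\<lambda>x. a * f x + b * g x) = (\<lambda>x. a * T f x + b * T g x)"
proof -
  assume T: "lin T"
  have "T (\<lambda>x. a * f x + b * g x) = (\<lambda>x. T (\<lambda>x. a * f x) x + T (\<lambda>x. b * g x) x)"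
    by (rule lin_add[OF T])
  also have "\<dots> = (\<lambda>x. a * T f x + b * T g x)" by (simp add: lin_scale[OF T])
  finally show ?thesis .
qed

lemma lin_funpow: "lin T \<Longrightarrow> lin (T ^^ n)"
  by (induction n) (auto simp: lin_def)

lemma lin_sum:
  assumes "lin T" "finite I"
  shows "T (\<lambda>x. \<Sum>i\<in>I. c i * f i x) = (\<lambda>x. \<Sum>i\<in>I. c i * T (f i) x)"
  using assms(2)
proof (induction I rule: finite_induct)
  case empty thus ?case using lin_zero[OF assms(1)] by simp
next
  case (insert a I)
  have "T (\<lambda>x. \<Sum>i\<in>insert a I. c i * f i x) = T (\<lambda>x. c a * f a x + 1 * (\<Sum>i\<in>I. c i * f i x))"
    using insert by simp
  also have "\<dots> = (\<lambda>x. c a * T (f a) x + 1 * T (\<lambda>x. \<Sum>i\<in>I. c i * f i x) x)"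
    by (rule lin_comb[OF assms(1)])
  also have "\<dots> = (\<lambda>x. \<Sum>i\<in>insert a I. c i * T (f i) x)" using insert by simp
  finally show ?case .
qed

definition opolyN :: "nat \<Rightarrow> ((complex \<Rightarrow> complex) \<Rightarrow> (complex \<Rightarrow> complex)) \<Rightarrow> (complex \<Rightarrow> complex) \<Rightarrow> complex poly \<Rightarrow> (complex \<Rightarrow> complex)" where
  "opolyN N T w p = (\<lambda>x. \<Sum>i<N. poly.coeff p i * (T ^^ i) w x)"

lemma opolyN_smult: "opolyN N T w (Polynomial.smult a p) = (\<lambda>x. a * opolyN N T w p x)"
  unfolding opolyN_def by (simp add: sum_distrib_left mult.assoc)

lemma opolyN_1: "N > 0 \<Longrightarrow> opolyN N T w 1 = w"
  unfolding opolyN_def by (cases N) (auto simp: coeff_1 sum.lessThan_Suc_shift)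

lemma opolyN_mult_lin:
  assumes T: "lin T" and deg: "Suc (degree P) < N"
  shows "opolyN N T w (P * [:-c, 1:]) = opolyN N T (\<lambda>x. T w x - c * w x) P"
proof -
  obtain M where N: "N = Suc M" using deg by (cases N) auto
  have dM: "degree P < M" using deg N by simp
  have eqp: "P * [:-c, 1:] = Polynomial.smult (-c) P + pCons 0 P"
    by (simp add: mult_pCons_right)
  have pw: "(T ^^ i) (\<lambda>x. T w x - c * w x) = (\<lambda>x. (T ^^ Suc i) w x - c * (T ^^ i) w x)" for i
  proof -
    have "(T ^^ i) (\<lambda>x. 1 * T w x + (- c) * w x) = (\<lambda>x. 1 * (T ^^ i) (T w) x + (- c) * (T ^^ i) w x)"
      by (rule lin_comb[OF lin_funpow[OF T]])
    moreover have "(T ^^ i) (T w) = (T ^^ Suc i) w" by (simp add: funpow_swap1)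
    ultimately show ?thesis by simp
  qed
  show ?thesis
  proof
    fix x
    have cM: "poly.coeff P M = 0" using dM by (simp add: coeff_eq_0)
    have "opolyN N T w (P * [:-c, 1:]) x
        = (\<Sum>i<Suc M. (- c) * (poly.coeff P i * (T ^^ i) w x) + poly.coeff (pCons 0 P) i * (T ^^ i) w x)"
      unfolding opolyN_def N eqp by (intro sum.cong refl) (simp add: algebra_simps)
    also have "\<dots> = (\<Sum>i<Suc M. (- c) * (poly.coeff P i * (T ^^ i) w x)) + (\<Sum>i<Suc M. poly.coeff (pCons 0 P) i * (T ^^ i) w x)"
      by (rule sum.distrib)
    also have "(\<Sum>i<Suc M. poly.coeff (pCons 0 P) i * (T ^^ i) w x) = (\<Sum>i<M. poly.coeff P i * (T ^^ Suc i) w x)"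
      by (subst sum.lessThan_Suc_shift) simp
    also have "(\<Sum>i<Suc M. (- c) * (poly.coeff P i * (T ^^ i) w x)) = (\<Sum>i<M. (- c) * (poly.coeff P i * (T ^^ i) w x))"
      using cM by simp
    also have "(\<Sum>i<M. (- c) * (poly.coeff P i * (T ^^ i) w x)) + (\<Sum>i<M. poly.coeff P i * (T ^^ Suc i) w x)
        = (\<Sum>i<M. poly.coeff P i * ((T ^^ Suc i) w x - c * (T ^^ i) w x))"
      by (simp add: sum.distrib[symmetric] algebra_simps)
    also have "\<dots> = (\<Sum>i<Suc M. poly.coeff P i * ((T ^^ Suc i) w x - c * (T ^^ i) w x))"
      using cM by simp
    also have "\<dots> = opolyN N T (\<lambda>x. T w x - c * w x) P x"
      unfolding opolyN_def N pw ..
    finally show "opolyN N T w (P * [:-c, 1:]) x = opolyN N T (\<lambda>x. T w x - c * w x) P x" .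
  qed
qed


lemma funpow_in: "lin T \<Longrightarrow> (\<forall>f\<in>W. T f \<in> W) \<Longrightarrow> w \<in> W \<Longrightarrow> (T ^^ i) w \<in> W"
  by (induction i) auto

lemma sub_comb:
  assumes "Cvs.subspace W" "f \<in> W" "g \<in> W"
  shows "(\<lambda>x. a * f x + b * g x) \<in> W"
proof -
  have "(\<lambda>x. a * f x) \<in> W" "(\<lambda>x. b * g x) \<in> W" using assms by (auto intro: Cvs.subspace_scale)
  hence "(\<lambda>x. a * f x) + (\<lambda>x. b * g x) \<in> W" by (intro Cvs.subspace_add[OF assms(1)])
  thus ?thesis by (simp add: plus_fun_def)
qed

lemma ex_annih:
  assumes W: "Cvs.subspace W" "W \<subseteq> Cvs.span S" "finite S" and w: "w \<in> W"
    and T: "lin T" "\<forall>f\<in>W. T f \<in> W"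
  shows "\<exists>g. g \<noteq> 0 \<and> degree g < Suc (card S) \<and> opolyN (Suc (card S)) T w g = 0"
proof -
  define n where "n = card S"
  define f where "f i = (T ^^ i) w" for i
  have fW: "f i \<in> W" for i unfolding f_def by (rule funpow_in[OF T w])
  show ?thesis
  proof (cases "inj_on f {..n}")
    case True
    define A where "A = f ` {..n}"
    have cardA: "card A = Suc n" unfolding A_def using True by (simp add: card_image)
    have finA: "finite A" unfolding A_def by simp
    have AS: "A \<subseteq> Cvs.span S" unfolding A_def using fW W(2) by auto
    have "\<not> Cvs.independent A"
    proof
      assume "Cvs.independent A"
      from Cvs.independent_span_bound[OF W(3) this AS] have "card A \<le> card S" by simp
      thus False using cardA by (simp add: n_def)
    qed
    hence "\<exists>c. (\<exists>v\<in>A. c v \<noteq> 0) \<and> (\<Sum>v\<in>A. (\<lambda>x. c v * v x)) = 0"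
      using Cvs.dependent_finite[OF finA] by (simp only: not_not)
    then obtain c where c': "(\<exists>v\<in>A. c v \<noteq> 0) \<and> (\<Sum>v\<in>A. (\<lambda>x. c v * v x)) = 0" ..
    note c = c'[THEN conjunct1] c'[THEN conjunct2]
    define g where "g = (\<Sum>i\<le>n. Polynomial.monom (c (f i)) i)"
    have cg: "poly.coeff g j = (if j \<le> n then c (f j) else 0)" for j
      unfolding g_def by (simp add: coeff_sum coeff_monom)
    have "g \<noteq> 0"
    proof -
      obtain i where "i \<le> n" "c (f i) \<noteq> 0" using c(1) unfolding A_def by auto
      hence "poly.coeff g i \<noteq> 0" using cg by simp
      thus ?thesis by auto
    qed
    moreover have "degree g < Suc n" using cg by (intro le_imp_less_Suc degree_le) auto
    moreover have "opolyN (Suc n) T w g = 0"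
    proof
      fix x
      have "opolyN (Suc n) T w g x = (\<Sum>i\<le>n. c (f i) * f i x)"
        unfolding opolyN_def lessThan_Suc_atMost f_def[symmetric] by (intro sum.cong refl) (simp add: cg)
      also have "\<dots> = (\<Sum>v\<in>A. c v * v x)" unfolding A_def by (subst sum.reindex[OF True]) simp
      also have "\<dots> = (\<Sum>v\<in>A. (\<lambda>x. c v * v x)) x" by (simp add: sum_fun_apply)
      also have "\<dots> = 0" using c(2) by simp
      finally show "opolyN (Suc n) T w g x = 0 x" by simp
    qed
    ultimately show ?thesis unfolding n_def by blast
  next
    case False
    then obtain i j where ij: "i \<le> n" "j \<le> n" "i \<noteq> j" "f i = f j" unfolding inj_on_def by auto
    define g where "g = (Polynomial.monom 1 i - Polynomial.monom 1 j :: complex poly)"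
    have cg: "poly.coeff g k = (if k = i then 1 else 0) - (if k = j then 1 else 0)" for k
      unfolding g_def by (simp add: coeff_monom)
    have "poly.coeff g i = 1" using ij cg by simp
    hence "g \<noteq> 0" by auto
    moreover have "degree g < Suc n" using cg ij by (intro le_imp_less_Suc degree_le) auto
    moreover have "opolyN (Suc n) T w g = 0"
    proof
      fix x
      have "opolyN (Suc n) T w g x = (\<Sum>k<Suc n. (if k = i then f k x else 0) - (if k = j then f k x else 0))"
        unfolding opolyN_def f_def by (intro sum.cong refl) (simp add: cg)
      also have "\<dots> = f i x - f j x" using ij by (simp add: sum_subtractf)
      also have "\<dots> = 0" using ij by simp
      finally show "opolyN (Suc n) T w g x = 0 x" by simp
    qed
    ultimately show ?thesis unfolding n_def by blast
  qed
qed

lemma eig: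
  assumes W: "Cvs.subspace W" "W \<subseteq> Cvs.span S" "finite S" and w: "w \<in> W" "w \<noteq> 0"
    and T: "lin T" "\<forall>f\<in>W. T f \<in> W"
  shows "\<exists>l v. v \<in> W \<and> v \<noteq> 0 \<and> T v = (\<lambda>x. l * v x)"
proof -
  define N where "N = Suc (card S)"
  obtain g where g: "g \<noteq> 0" "degree g < N" "opolyN N T w g = 0"
    using ex_annih[OF W w(1) T] unfolding N_def by blast
  obtain r where r: "Polynomial.smult (lead_coeff g) (\<Prod>i<degree g. [:-r i, 1:]) = g"
    by (rule complex_poly_decompose')
  define P where "P k = (\<Prod>i<k. [:-r i, 1:])" for k
  have degP: "degree (P k) = k" for k
    unfolding P_def by (subst degree_prod_eq_sum_degree) auto
  have "opolyN N T w g = (\<lambda>x. lead_coeff g * opolyN N T w (P (degree g)) x)"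
    unfolding P_def by (subst r[symmetric]) (simp only: opolyN_smult)
  hence "(\<lambda>x. lead_coeff g * opolyN N T w (P (degree g)) x) = 0" using g(3) by simp
  hence Pg: "opolyN N T w (P (degree g)) = 0" using g(1) by (auto simp: fun_eq_iff)
  have "\<forall>v\<in>W. v \<noteq> 0 \<longrightarrow> opolyN N T v (P k) = 0 \<longrightarrow> (\<exists>l v. v \<in> W \<and> v \<noteq> 0 \<and> T v = (\<lambda>x. l * v x))"
    if "k \<le> degree g" for k
    using that
  proof (induction k)
    case 0
    have "N > 0" by (simp add: N_def)
    thus ?case unfolding P_def by (auto simp: opolyN_1)
  next
    case (Suc k)
    show ?case
    proof (intro ballI impI)
      fix v assume v: "v \<in> W" "v \<noteq> 0" and h: "opolyN N T v (P (Suc k)) = 0"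
      have "P (Suc k) = P k * [:-r k, 1:]" unfolding P_def by simp
      moreover have "Suc (degree (P k)) < N" using Suc.prems g(2) degP by simp
      ultimately have "opolyN N T v (P (Suc k)) = opolyN N T (\<lambda>x. T v x - r k * v x) (P k)"
        using opolyN_mult_lin[OF T(1)] by simp
      hence h': "opolyN N T (\<lambda>x. T v x - r k * v x) (P k) = 0" using h by simp
      show "\<exists>l v. v \<in> W \<and> v \<noteq> 0 \<and> T v = (\<lambda>x. l * v x)"
      proof (cases "(\<lambda>x. T v x - r k * v x) = 0")
        case True
        hence "T v = (\<lambda>x. r k * v x)" by (auto simp: fun_eq_iff)
        thus ?thesis using v by blast
      next
        case False
        have "(\<lambda>x. 1 * T v x + (- r k) * v x) \<in> W" using sub_comb[OF W(1)] T(2) v(1) by blast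
        hence vW: "(\<lambda>x. T v x - r k * v x) \<in> W" by simp
        have IH: "\<forall>v\<in>W. v \<noteq> 0 \<longrightarrow> opolyN N T v (P k) = 0 \<longrightarrow> (\<exists>l v. v \<in> W \<and> v \<noteq> 0 \<and> T v = (\<lambda>x. l * v x))"
          by (rule Suc.IH) (use Suc.prems in simp)
        show ?thesis using IH[rule_format, OF vW False h'] .
      qed
    qed
  qed
  thus ?thesis using w Pg by blast
qed

lemma joint_eig:
  assumes "finite F"
  shows "Cvs.subspace W \<Longrightarrow> W \<subseteq> Cvs.span S \<Longrightarrow> finite S \<Longrightarrow> w \<in> W \<Longrightarrow> w \<noteq> 0 \<Longrightarrow>
    (\<forall>T\<in>F. lin T \<and> (\<forall>f\<in>W. T f \<in> W)) \<Longrightarrow> (\<forall>T1\<in>F. \<forall>T2\<in>F. \<forall>f. T1 (T2 f) = T2 (T1 f)) \<Longrightarrow>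
    \<exists>v\<in>W. v \<noteq> 0 \<and> (\<forall>T\<in>F. \<exists>l. T v = (\<lambda>x. l * v x))"
  using assms
proof (induction F arbitrary: W w rule: finite_induct)
  case empty thus ?case by blast
next
  case (insert T F)
  have T: "lin T" "\<forall>f\<in>W. T f \<in> W" using insert.prems by auto
  obtain l v where v: "v \<in> W" "v \<noteq> 0" "T v = (\<lambda>x. l * v x)"
    using eig[OF insert.prems(1-5) T] by blast
  define W' where "W' = {f\<in>W. T f = (\<lambda>x. l * f x)}"
  have sub: "Cvs.subspace W'"
    unfolding Cvs.subspace_def
  proof (intro conjI ballI allI)
    show "0 \<in> W'" unfolding W'_def using Cvs.subspace_0[OF insert.prems(1)] lin_zero[OF T(1)]
      by (simp add: zero_fun_def)
  next
    fix f g assume fg: "f \<in> W'" "g \<in> W'"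
    have "f + g \<in> W" using fg Cvs.subspace_add[OF insert.prems(1)] unfolding W'_def by auto
    moreover have "T (f + g) = (\<lambda>x. l * (f + g) x)"
    proof -
      have "T (f + g) = T (\<lambda>x. f x + g x)" by (simp add: plus_fun_def)
      also have "\<dots> = (\<lambda>x. T f x + T g x)" by (rule lin_add[OF T(1)])
      also have "\<dots> = (\<lambda>x. l * f x + l * g x)" using fg unfolding W'_def by simp
      also have "\<dots> = (\<lambda>x. l * (f + g) x)" by (simp add: distrib_left)
      finally show ?thesis .
    qed
    ultimately show "f + g \<in> W'" unfolding W'_def by simp
  next
    fix c f assume "f \<in> W'"
    thus "(\<lambda>x. c * f x) \<in> W'" unfolding W'_def using Cvs.subspace_scale[OF insert.prems(1)] lin_scale[OF T(1), of c f]
      by auto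
  qed
  have W'S: "W' \<subseteq> Cvs.span S" using insert.prems(2) unfolding W'_def by auto
  have inv: "\<forall>T'\<in>F. lin T' \<and> (\<forall>f\<in>W'. T' f \<in> W')"
  proof (rule ballI)
    fix T' assume T': "T' \<in> F"
    have "lin T'" using insert.prems(6) T' by auto
    moreover have "\<forall>f\<in>W'. T' f \<in> W'"
    proof
      fix f assume f: "f \<in> W'"
      have TW: "T' f \<in> W" using insert.prems(6) T' f unfolding W'_def by auto
      have "T (T' f) = T' (T f)"
      proof -
        have h1: "\<forall>T2\<in>insert T F. \<forall>f. T (T2 f) = T2 (T f)" using insert.prems(7) by (rule bspec) simp
        have h2: "\<forall>f. T (T' f) = T' (T f)" using h1 by (rule bspec) (simp add: T')
        thus ?thesis by (rule spec)
      qed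
      moreover have "T f = (\<lambda>x. l * f x)" using f unfolding W'_def by simp
      moreover have "lin T'" using insert.prems(6) T' by blast
      ultimately have "T (T' f) = (\<lambda>x. l * T' f x)" using lin_scale[of T' l f] by simp
      with TW show "T' f \<in> W'" unfolding W'_def by simp
    qed
    ultimately show "lin T' \<and> (\<forall>f\<in>W'. T' f \<in> W')" by blast
  qed
  have comm: "\<forall>T1\<in>F. \<forall>T2\<in>F. \<forall>f. T1 (T2 f) = T2 (T1 f)"
  proof (intro ballI allI)
    fix T1 T2 f assume "T1 \<in> F" "T2 \<in> F"
    hence i1: "T1 \<in> insert T F" and i2: "T2 \<in> insert T F" by auto
    have "\<forall>T2\<in>insert T F. \<forall>f. T1 (T2 f) = T2 (T1 f)" using insert.prems(7) i1 by (rule bspec)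
    hence "\<forall>f. T1 (T2 f) = T2 (T1 f)" using i2 by (rule bspec)
    thus "T1 (T2 f) = T2 (T1 f)" by (rule spec)
  qed
  obtain v' where v': "v' \<in> W'" "v' \<noteq> 0" "\<forall>T'\<in>F. \<exists>l. T' v' = (\<lambda>x. l * v' x)"
    using insert.IH[OF sub W'S insert.prems(3) _ v(2) inv comm] v unfolding W'_def by blast
  show ?case using v' unfolding W'_def by blast
qed


interpretation QQ: vector_space_pair "\<lambda>(c::rat) (x::complex). of_rat c * x" "\<lambda>(c::rat) (x::complex). of_rat c * x"
  by unfold_locales

lemma opolyN_T:
  assumes "lin T"
  shows "T (opolyN N T w p) = opolyN N T (T w) p"
proof -
  have "T (opolyN N T w p) = (\<lambda>x. \<Sum>i<N. poly.coeff p i * T ((T ^^ i) w) x)"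
    unfolding opolyN_def by (rule lin_sum[OF assms]) simp
  also have "\<dots> = opolyN N T (T w) p"
    unfolding opolyN_def by (simp add: funpow_swap1)
  finally show ?thesis .
qed

lemma opolyN_comb:
  assumes "lin T"
  shows "opolyN N T (\<lambda>x. a * w1 x + b * w2 x) p = (\<lambda>x. a * opolyN N T w1 p x + b * opolyN N T w2 p x)"
  unfolding opolyN_def lin_comb[OF lin_funpow[OF assms]]
  by (simp add: sum.distrib sum_distrib_left algebra_simps)

locale emb_ctx = nf K m B + minpoly_ctx u q for K m B u q +
  assumes uK: "u \<in> K"
begin

definition V :: "(complex \<Rightarrow> complex) set" where
  "V = {l. (\<forall>x. x \<notin> K \<longrightarrow> l x = 0) \<and> (\<forall>x\<in>K. \<forall>y\<in>K. l (x + y) = l x + l y) \<and>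
           (\<forall>r. \<forall>x\<in>K. l (of_rat r * x) = of_rat r * l x)}"

definition Tm :: "complex \<Rightarrow> (complex \<Rightarrow> complex) \<Rightarrow> (complex \<Rightarrow> complex)" where
  "Tm a l = (\<lambda>x. if x \<in> K then l (a * x) else 0)"

lemma V_comb:
  assumes "finite I" "\<And>i. i \<in> I \<Longrightarrow> f i \<in> V"
  shows "(\<lambda>x. \<Sum>i\<in>I. c i * f i x) \<in> V"
  using assms unfolding V_def
  by (auto simp: sum.distrib sum_distrib_left distrib_left mult.left_commute)

lemma V_out: "l \<in> V \<Longrightarrow> x \<notin> K \<Longrightarrow> l x = 0"
  and V_add: "l \<in> V \<Longrightarrow> x \<in> K \<Longrightarrow> y \<in> K \<Longrightarrow> l (x + y) = l x + l y"
  and V_rat: "l \<in> V \<Longrightarrow> x \<in> K \<Longrightarrow> l (of_rat r * x) = of_rat r * l x"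
  unfolding V_def by auto

lemma V_zero: "l \<in> V \<Longrightarrow> l 0 = 0"
  using V_rat[of l 0 0] K0[OF K] by simp

lemma V_Rats: "l \<in> V \<Longrightarrow> x \<in> K \<Longrightarrow> a \<in> \<rat> \<Longrightarrow> l (a * x) = a * l x"
  by (auto elim!: Rats_cases simp: V_rat)

lemma V_lin:
  assumes l: "l \<in> V" and "finite I" and "\<And>i. i \<in> I \<Longrightarrow> y i \<in> K" and "\<And>i. i \<in> I \<Longrightarrow> a i \<in> \<rat>"
  shows "l (\<Sum>i\<in>I. a i * y i) = (\<Sum>i\<in>I. a i * l (y i))"
  using assms(2-4)
proof (induction I rule: finite_induct)
  case empty thus ?case using V_zero[OF l] by simp
next
  case (insert j I)
  have yK: "a j * y j \<in> K" using insert.prems by (intro Kmult[OF K]) (auto intro: KRats[OF K])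
  have sK: "(\<Sum>i\<in>I. a i * y i) \<in> K" using insert.prems by (intro Ksum[OF K] Kmult[OF K]) (auto intro: KRats[OF K])
  have "l (\<Sum>i\<in>insert j I. a i * y i) = l (a j * y j + (\<Sum>i\<in>I. a i * y i))" using insert by simp
  also have "\<dots> = l (a j * y j) + l (\<Sum>i\<in>I. a i * y i)" using V_add[OF l yK sK] .
  also have "l (a j * y j) = a j * l (y j)" using insert.prems by (intro V_Rats[OF l]) auto
  also have "l (\<Sum>i\<in>I. a i * y i) = (\<Sum>i\<in>I. a i * l (y i))" using insert by auto
  finally show ?case using insert by simp
qed

lemma V_subspace: "Cvs.subspace V"
  unfolding Cvs.subspace_def
proof (intro conjI ballI allI)
  show "0 \<in> V" by (simp add: V_def)
next
  fix f g assume "f \<in> V" "g \<in> V"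
  thus "f + g \<in> V" by (auto simp: V_def plus_fun_def distrib_left)
next
  fix c f assume "f \<in> V"
  thus "(\<lambda>x. c * f x) \<in> V" by (auto simp: V_def distrib_left mult.left_commute)
qed

definition coef :: "complex \<Rightarrow> complex \<Rightarrow> rat" where
  "coef x = (SOME c. x = (\<Sum>b\<in>B. of_rat (c b) * b))"

lemma coef: "x \<in> K \<Longrightarrow> x = (\<Sum>b\<in>B. of_rat (coef x b) * b)"
proof -
  assume "x \<in> K"
  hence "\<exists>c. x = (\<Sum>b\<in>B. of_rat (c b) * b)" using Bspan by blast
  thus ?thesis unfolding coef_def by (rule someI_ex)
qed

definition crd :: "complex \<Rightarrow> complex \<Rightarrow> complex" where
  "crd b = (\<lambda>x. if x \<in> K then of_rat (coef x b) else 0)"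

lemma V_span: "V \<subseteq> Cvs.span (crd ` B)"
proof
  fix l assume l: "l \<in> V"
  have eq: "l = (\<Sum>b\<in>B. (\<lambda>y. l b * crd b y))"
  proof
    fix x
    show "l x = (\<Sum>b\<in>B. (\<lambda>y. l b * crd b y)) x"
    proof (cases "x \<in> K")
      case True
      have "l x = l (\<Sum>b\<in>B. of_rat (coef x b) * b)" using coef[OF True] by simp
      also have "\<dots> = (\<Sum>b\<in>B. of_rat (coef x b) * l b)" using BK by (intro V_lin[OF l finB]) auto
      also have "\<dots> = (\<Sum>b\<in>B. (\<lambda>y. l b * crd b y)) x"
        using True by (simp add: sum_fun_apply crd_def mult.commute)
      finally show ?thesis .
    next
      case False
      thus ?thesis using V_out[OF l False] by (simp add: sum_fun_apply crd_def)
    qed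
  qed
  have "(\<lambda>y. l b * crd b y) \<in> Cvs.span (crd ` B)" if "b \<in> B" for b
    using Cvs.span_scale[OF Cvs.span_base[of "crd b" "crd ` B"], of "l b"] that by simp
  hence "(\<Sum>b\<in>B. (\<lambda>y. l b * crd b y)) \<in> Cvs.span (crd ` B)" by (intro Cvs.span_sum) auto
  thus "l \<in> Cvs.span (crd ` B)" using eq by simp
qed

lemma Tm_lin: "lin (Tm a)"
  unfolding lin_def Tm_def by (auto simp: fun_eq_iff)

lemma Tm_V:
  assumes a: "a \<in> K" and l: "l \<in> V"
  shows "Tm a l \<in> V"
  unfolding V_def mem_Collect_eq
proof (intro conjI allI ballI impI)
  fix x assume "x \<notin> K" thus "Tm a l x = 0" by (simp add: Tm_def)
next
  fix x y assume xy: "x \<in> K" "y \<in> K"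
  hence "a * x \<in> K" "a * y \<in> K" "x + y \<in> K" using a by (auto intro: Kmult[OF K] Kadd[OF K])
  thus "Tm a l (x + y) = Tm a l x + Tm a l y"
    using xy V_add[OF l, of "a * x" "a * y"] by (simp add: Tm_def distrib_left)
next
  fix r x assume x: "x \<in> K"
  hence ax: "a * x \<in> K" "of_rat r * x \<in> K" using a by (auto intro: Kmult[OF K] Krat[OF K])
  have "l (a * (of_rat r * x)) = l (of_rat r * (a * x))" by (simp add: ac_simps)
  also have "\<dots> = of_rat r * l (a * x)" using V_rat[OF l ax(1)] .
  finally show "Tm a l (of_rat r * x) = of_rat r * Tm a l x" using x ax by (simp add: Tm_def)
qed

lemma Tm_comm: "a \<in> K \<Longrightarrow> b \<in> K \<Longrightarrow> Tm a (Tm b l) = Tm b (Tm a l)"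
  unfolding Tm_def by (auto simp: fun_eq_iff mult.left_commute intro: Kmult[OF K])

lemma Tm_pow:
  assumes "a \<in> K" "l \<in> V"
  shows "(Tm a ^^ i) l = (\<lambda>x. if x \<in> K then l (a ^ i * x) else 0)"
proof (induction i)
  case 0 show ?case using V_out[OF assms(2)] by auto
next
  case (Suc i)
  show ?case
  proof
    fix x
    show "(Tm a ^^ Suc i) l x = (if x \<in> K then l (a ^ Suc i * x) else 0)"
    proof (cases "x \<in> K")
      case True
      hence ax: "a * x \<in> K" using assms(1) by (intro Kmult[OF K])
      have "(Tm a ^^ Suc i) l x = (Tm a ^^ i) l (a * x)" using True by (simp add: Tm_def)
      also have "\<dots> = l (a ^ i * (a * x))" using ax Suc by simp
      finally show ?thesis using True by (simp add: ac_simps)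
    next
      case False
      thus ?thesis by (simp add: Tm_def)
    qed
  qed
qed

end

lemma poly_sum_bound:
  fixes p :: "complex poly"
  assumes "degree p < N"
  shows "poly p x = (\<Sum>i<N. poly.coeff p i * x ^ i)"
proof -
  have "poly p x = (\<Sum>i\<le>degree p. poly.coeff p i * x ^ i)" by (rule poly_altdef)
  also have "\<dots> = (\<Sum>i<N. poly.coeff p i * x ^ i)"
    using assms by (intro sum.mono_neutral_left) (auto simp: coeff_eq_0)
  finally show ?thesis .
qed

context emb_ctx
begin

lemma q_annih:
  assumes l: "l \<in> V" and N: "degree q < N"
  shows "opolyN N (Tm u) l q = 0"
proof
  fix x
  show "opolyN N (Tm u) l q x = 0 x"
  proof (cases "x \<in> K")
    case True
    have cq: "poly.coeff q i \<in> \<rat>" for i using q(1) by (simp add: ratpoly_def)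
    have "opolyN N (Tm u) l q x = (\<Sum>i<N. poly.coeff q i * l (u ^ i * x))"
      unfolding opolyN_def Tm_pow[OF uK l] using True by simp
    also have "\<dots> = l (\<Sum>i<N. poly.coeff q i * (u ^ i * x))"
      using True cq by (intro V_lin[OF l, symmetric]) (auto intro: Kmult[OF K] Kpower[OF K] uK)
    also have "(\<Sum>i<N. poly.coeff q i * (u ^ i * x)) = poly q u * x"
      unfolding poly_sum_bound[OF N] by (simp add: sum_distrib_right mult.assoc)
    also have "\<dots> = 0" using q(3) by simp
    finally show ?thesis using V_zero[OF l] by simp
  next
    case False
    thus ?thesis unfolding opolyN_def Tm_pow[OF uK l] by simp
  qed
qed

lemma q_min_contra:
  assumes "ratpoly P" "P \<noteq> 0" "poly P u = 0" "degree P < degree q"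
  shows False
  using qmin assms by force

lemma u_pow_inj: "inj_on (\<lambda>i. u ^ i) {..<degree q}"
proof (rule inj_onI, rule ccontr)
  fix i j assume ij: "i \<in> {..<degree q}" "j \<in> {..<degree q}" "u ^ i = u ^ j" "i \<noteq> j"
  define P where "P = (Polynomial.monom 1 i - Polynomial.monom 1 j :: complex poly)"
  have "ratpoly P" unfolding P_def by (intro ratpoly_diff ratpoly_monom) auto
  moreover have "poly.coeff P i = 1" using ij unfolding P_def by (simp add: coeff_monom)
  hence "P \<noteq> 0" by auto
  moreover have "poly P u = 0" unfolding P_def using ij by (simp add: poly_monom)
  moreover have "degree P < degree q"
    unfolding P_def using ij by (intro le_less_trans[OF degree_diff_le_max]) (auto simp: degree_monom_eq)
  ultimately show False by (rule q_min_contra)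
qed

lemma indep_E0: "Qvs.independent ((\<lambda>i. u ^ i) ` {..<degree q})"
  unfolding Qvs.independent_explicit_finite_subsets
proof (intro allI impI ballI)
  fix S c v
  assume S: "S \<subseteq> (\<lambda>i. u ^ i) ` {..<degree q}" "finite S"
    and sum0: "(\<Sum>v\<in>S. of_rat (c v) * v) = 0" and v: "v \<in> S"
  define J where "J = {i\<in>{..<degree q}. u ^ i \<in> S}"
  have SJ: "S = (\<lambda>i. u ^ i) ` J" unfolding J_def using S(1) by auto
  have injJ: "inj_on (\<lambda>i. u ^ i) J" using u_pow_inj by (rule inj_on_subset) (auto simp: J_def)
  have finJ: "finite J" unfolding J_def by simp
  define P where "P = (\<Sum>i\<in>J. Polynomial.monom (of_rat (c (u ^ i)) :: complex) i)"
  have cP: "poly.coeff P k = (if k \<in> J then of_rat (c (u ^ k)) else 0)" for k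
    unfolding P_def by (simp add: coeff_sum coeff_monom finJ)
  have "ratpoly P" unfolding P_def by (intro ratpoly_sum ratpoly_monom) auto
  moreover have "poly P u = 0"
  proof -
    have "poly P u = (\<Sum>i\<in>J. of_rat (c (u ^ i)) * u ^ i)" unfolding P_def by (simp add: poly_sum poly_monom)
    also have "\<dots> = (\<Sum>v\<in>S. of_rat (c v) * v)" unfolding SJ by (subst sum.reindex[OF injJ]) simp
    finally show ?thesis using sum0 by simp
  qed
  moreover have "degree P < degree q"
  proof -
    have "degree P \<le> degree q - 1" using cP by (intro degree_le) (auto simp: J_def)
    thus ?thesis using q_deg by simp
  qed
  ultimately have "P = 0" using q_min_contra by blast
  obtain i where i: "i \<in> J" "v = u ^ i" using v SJ by auto
  have "poly.coeff P i = of_rat (c v)" using cP i by simp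
  thus "c v = 0" using \<open>P = 0\<close> by simp
qed

lemma sep_functional:
  "\<exists>l\<in>V. \<forall>i<degree q. l (u ^ i) = (if i = degree q - 1 then 1 else 0)"
proof -
  define E where "E = (\<lambda>i. u ^ i) ` {..<degree q}"
  define f where "f v = (if v = u ^ (degree q - 1) then 1 else (0::complex))" for v
  define L where "L = QQ.construct E f"
  have lin: "Vector_Spaces.linear (\<lambda>(c::rat) (x::complex). of_rat c * x) (\<lambda>(c::rat) (x::complex). of_rat c * x) L"
    unfolding L_def E_def by (rule QQ.linear_construct[OF indep_E0])
  hence Ladd: "L (x + y) = L x + L y" and Lscale: "L (of_rat r * x) = of_rat r * L x" for x y r
    unfolding Vector_Spaces.linear_iff by auto
  define l where "l x = (if x \<in> K then L x else 0)" for x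
  have "l \<in> V" unfolding V_def l_def using Ladd Lscale by (auto intro: Kadd[OF K] Kmult[OF K] Krat[OF K])
  moreover have "l (u ^ i) = (if i = degree q - 1 then 1 else 0)" if i: "i < degree q" for i
  proof -
    have "u ^ i \<in> K" by (rule Kpower[OF K uK])
    hence "l (u ^ i) = L (u ^ i)" by (simp add: l_def)
    also have "\<dots> = f (u ^ i)" unfolding L_def by (rule QQ.construct_basis[OF indep_E0[folded E_def]]) (use i in \<open>auto simp: E_def\<close>)
    also have "\<dots> = (if i = degree q - 1 then 1 else 0)"
    proof -
      have "degree q - 1 < degree q" using q_deg by simp
      hence "u ^ i = u ^ (degree q - 1) \<longleftrightarrow> i = degree q - 1"
        using u_pow_inj i unfolding inj_on_def by auto
      thus ?thesis by (simp add: f_def)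
    qed
    finally show ?thesis .
  qed
  ultimately show ?thesis by blast
qed

end

context emb_ctx
begin

lemma Tm_maps: "\<forall>f\<in>V. Tm a f \<in> V" if "a \<in> K"
  using Tm_V[OF that] by blast

lemma embedding_for_root:
  assumes z: "poly q z = 0"
  shows "\<exists>\<sigma>\<in>embeddings K. \<sigma> u = z"
proof -
  define d where "d = degree q"
  define N where "N = Suc d"
  define T where "T = Tm u"
  have linT: "lin T" unfolding T_def by (rule Tm_lin)
  have TV: "\<forall>f\<in>V. T f \<in> V" unfolding T_def by (rule Tm_maps[OF uK])
  obtain l0 where l0: "l0 \<in> V" "\<And>i. i < d \<Longrightarrow> l0 (u ^ i) = (if i = d - 1 then 1 else 0)"
    using sep_functional unfolding d_def by blast
  have "[:-z, 1:] dvd q" using z by (simp add: poly_eq_0_iff_dvd)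
  then obtain g0 where "q = [:-z, 1:] * g0" by (elim dvdE)
  hence qg: "q = g0 * [:-z, 1:]" by (simp add: mult.commute)
  have g00: "g0 \<noteq> 0" using qg q_ne0 by auto
  have dg: "d = Suc (degree g0)"
  proof -
    have "degree (g0 * [:-z, 1:]) = degree g0 + degree [:-z, 1:]" by (rule degree_mult_eq) (use g00 in auto)
    hence "degree q = Suc (degree g0)" using qg by simp
    thus ?thesis unfolding d_def .
  qed
  have lg: "lead_coeff g0 = 1"
  proof -
    have "lead_coeff (g0 * [:-z, 1:]) = lead_coeff g0 * lead_coeff [:-z, 1:]" by (rule lead_coeff_mult)
    thus ?thesis using q(2) qg by simp
  qed
  define v where "v = opolyN N T l0 g0"
  have powV: "(T ^^ i) l0 \<in> V" for i by (rule funpow_in[OF linT TV l0(1)])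
  have vV: "v \<in> V" unfolding v_def opolyN_def by (rule V_comb) (auto intro: powV)
  have v1: "v 1 = 1"
  proof -
    have "v 1 = (\<Sum>i<N. poly.coeff g0 i * l0 (u ^ i))"
      unfolding v_def opolyN_def T_def Tm_pow[OF uK l0(1)] using K1[OF K] by simp
    also have "\<dots> = (\<Sum>i<N. (if i = d - 1 then 1 else 0))"
    proof (intro sum.cong refl)
      fix i assume "i \<in> {..<N}"
      hence "i < d \<or> i = d" unfolding N_def by auto
      thus "poly.coeff g0 i * l0 (u ^ i) = (if i = d - 1 then 1 else 0)"
      proof
        assume "i < d"
        thus ?thesis using l0(2)[of i] lg dg by auto
      next
        assume "i = d"
        thus ?thesis using dg by (simp add: coeff_eq_0)
      qed
    qed
    also have "\<dots> = 1" unfolding N_def using dg by simp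
    finally show ?thesis .
  qed
  hence v0: "v \<noteq> 0" by auto
  have Tv: "T v = (\<lambda>x. z * v x)"
  proof -
    have "(\<lambda>x. 1 * T v x + (- z) * v x) = (\<lambda>x. 1 * opolyN N T (T l0) g0 x + (- z) * opolyN N T l0 g0 x)"
      unfolding v_def opolyN_T[OF linT] ..
    also have "\<dots> = opolyN N T (\<lambda>x. 1 * T l0 x + (- z) * l0 x) g0"
      by (rule opolyN_comb[OF linT, symmetric])
    also have "\<dots> = opolyN N T (\<lambda>x. T l0 x - z * l0 x) g0" by simp
    also have "\<dots> = opolyN N T l0 (g0 * [:-z, 1:])"
      by (rule opolyN_mult_lin[OF linT, symmetric]) (simp add: N_def dg)
    also have "\<dots> = 0" unfolding qg[symmetric] T_def by (rule q_annih[OF l0(1)]) (simp add: N_def d_def)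
    finally have "(\<lambda>x. 1 * T v x + (- z) * v x) = 0" .
    thus ?thesis by (auto simp: fun_eq_iff)
  qed
  define W0 where "W0 = {f\<in>V. T f = (\<lambda>x. z * f x)}"
  have sub: "Cvs.subspace W0"
    unfolding Cvs.subspace_def
  proof (intro conjI ballI allI)
    show "0 \<in> W0" unfolding W0_def using Cvs.subspace_0[OF V_subspace] lin_zero[OF linT]
      by (simp add: zero_fun_def)
  next
    fix f g assume fg: "f \<in> W0" "g \<in> W0"
    have "f + g \<in> V" using fg Cvs.subspace_add[OF V_subspace] unfolding W0_def by auto
    moreover have "T (f + g) = (\<lambda>x. z * (f + g) x)"
    proof -
      have "T (f + g) = T (\<lambda>x. f x + g x)" by (simp add: plus_fun_def)
      also have "\<dots> = (\<lambda>x. T f x + T g x)" by (rule lin_add[OF linT])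
      also have "\<dots> = (\<lambda>x. z * f x + z * g x)" using fg unfolding W0_def by simp
      also have "\<dots> = (\<lambda>x. z * (f + g) x)" by (simp add: distrib_left)
      finally show ?thesis .
    qed
    ultimately show "f + g \<in> W0" unfolding W0_def by simp
  next
    fix c f assume f: "f \<in> W0"
    have "(\<lambda>x. c * f x) \<in> V" using f Cvs.subspace_scale[OF V_subspace] unfolding W0_def by auto
    moreover have "T (\<lambda>x. c * f x) = (\<lambda>x. z * (c * f x))"
      using f lin_scale[OF linT, of c f] unfolding W0_def by (simp add: mult.left_commute)
    ultimately show "(\<lambda>x. c * f x) \<in> W0" unfolding W0_def by simp
  qed
  have W0S: "W0 \<subseteq> Cvs.span (crd ` B)" using V_span unfolding W0_def by auto
  have vW0: "v \<in> W0" unfolding W0_def using vV Tv by simp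
  define F where "F = Tm ` B"
  have finF: "finite F" unfolding F_def using finB by simp
  have Finv: "\<forall>T'\<in>F. lin T' \<and> (\<forall>f\<in>W0. T' f \<in> W0)"
  proof (rule ballI)
    fix T' assume "T' \<in> F"
    then obtain b where b: "b \<in> B" "T' = Tm b" unfolding F_def by auto
    have bK: "b \<in> K" using b BK by auto
    have "\<forall>f\<in>W0. T' f \<in> W0"
    proof
      fix f assume f: "f \<in> W0"
      have "T' f \<in> V" using f Tm_V[OF bK] b unfolding W0_def by auto
      moreover have "T (T' f) = T' (T f)" unfolding T_def b(2) by (rule Tm_comm[OF uK bK])
      hence "T (T' f) = (\<lambda>x. z * T' f x)" using f lin_scale[OF Tm_lin, of b z f] b unfolding W0_def by simp
      ultimately show "T' f \<in> W0" unfolding W0_def by simp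
    qed
    thus "lin T' \<and> (\<forall>f\<in>W0. T' f \<in> W0)" using b Tm_lin by simp
  qed
  have Fcomm: "\<forall>T1\<in>F. \<forall>T2\<in>F. \<forall>f. T1 (T2 f) = T2 (T1 f)"
    unfolding F_def using BK by (auto intro!: Tm_comm)
  obtain l where l: "l \<in> W0" "l \<noteq> 0" "\<forall>T'\<in>F. \<exists>c. T' l = (\<lambda>x. c * l x)"
    using joint_eig[OF finF sub W0S _ vW0 v0 Finv Fcomm] finB by blast
  have lV: "l \<in> V" and Tl: "T l = (\<lambda>x. z * l x)" using l(1) unfolding W0_def by auto
  have "\<forall>b\<in>B. \<exists>c. Tm b l = (\<lambda>x. c * l x)" using l(3) unfolding F_def by blast
  then obtain lam where lam: "\<And>b. b \<in> B \<Longrightarrow> Tm b l = (\<lambda>x. lam b * l x)" by metis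
  have mulB: "l (b * x) = lam b * l x" if "b \<in> B" "x \<in> K" for b x
  proof -
    have "Tm b l x = lam b * l x" using lam[OF that(1)] by simp
    thus ?thesis using that(2) by (simp add: Tm_def)
  qed
  have Lam: "\<exists>c. \<forall>x\<in>K. l (a * x) = c * l x" if a: "a \<in> K" for a
  proof -
    define c where "c = (\<Sum>b\<in>B. of_rat (coef a b) * lam b)"
    have "l (a * x) = c * l x" if x: "x \<in> K" for x
    proof -
      have "a * x = (\<Sum>b\<in>B. of_rat (coef a b) * b) * x"
        using coef[OF a] by (rule arg_cong[where f = "\<lambda>t. t * x"])
      also have "\<dots> = (\<Sum>b\<in>B. of_rat (coef a b) * (b * x))"
        by (simp add: sum_distrib_right mult.assoc)
      finally have "a * x = (\<Sum>b\<in>B. of_rat (coef a b) * (b * x))" .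
      hence "l (a * x) = (\<Sum>b\<in>B. of_rat (coef a b) * l (b * x))"
        using x BK by (simp add: V_lin[OF lV finB] Kmult[OF K] subsetD)
      also have "\<dots> = (\<Sum>b\<in>B. of_rat (coef a b) * (lam b * l x))" using mulB x by simp
      also have "\<dots> = c * l x" unfolding c_def by (simp add: sum_distrib_right mult.assoc)
      finally show ?thesis .
    qed
    thus ?thesis by blast
  qed
  have mul: "l (a * x) * l 1 = l a * l x" if ax: "a \<in> K" "x \<in> K" for a x
  proof -
    obtain c where c: "\<forall>x\<in>K. l (a * x) = c * l x" using Lam[OF ax(1)] by blast
    have "l (a * 1) = c * l 1" using c K1[OF K] by blast
    hence "l a = c * l 1" by simp
    thus ?thesis using c ax(2) by simp
  qed
  have l1: "l 1 \<noteq> 0"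
  proof
    assume l10: "l 1 = 0"
    have "l x = 0" for x
    proof (cases "x \<in> K")
      case True
      obtain c where c: "\<forall>y\<in>K. l (x * y) = c * l y" using Lam[OF True] by blast
      have "l (x * 1) = c * l 1" using c K1[OF K] by blast
      thus ?thesis using l10 by simp
    next
      case False thus ?thesis using V_out[OF lV] by simp
    qed
    hence "l = 0" by (simp add: fun_eq_iff)
    thus False using l(2) by simp
  qed
  define \<sigma> where "\<sigma> x = (if x \<in> K then l x / l 1 else undefined)" for x
  have "\<sigma> \<in> embeddings K"
    unfolding embeddings_def
  proof (intro CollectI conjI ballI)
    show "\<sigma> \<in> K \<rightarrow>\<^sub>E UNIV" by (auto simp: \<sigma>_def PiE_def extensional_def)
    show "\<sigma> 1 = 1" using l1 K1[OF K] by (simp add: \<sigma>_def)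
  next
    fix x y assume xy: "x \<in> K" "y \<in> K"
    have s: "x + y \<in> K" "x * y \<in> K" using xy by (auto intro: Kadd[OF K] Kmult[OF K])
    show "\<sigma> (x + y) = \<sigma> x + \<sigma> y" using xy s V_add[OF lV xy] by (simp add: \<sigma>_def add_divide_distrib)
    have "l (x * y) = l x * l y / l 1" using mul[OF xy] l1 by (simp add: field_simps)
    thus "\<sigma> (x * y) = \<sigma> x * \<sigma> y" using xy s l1 by (simp add: \<sigma>_def power2_eq_square)
  qed
  moreover have "\<sigma> u = z"
  proof -
    have "T l 1 = l (u * 1)" using K1[OF K] by (simp add: T_def Tm_def)
    hence "l u = z * l 1" using Tl by simp
    thus ?thesis using uK l1 by (simp add: \<sigma>_def)
  qed
  ultimately show ?thesis by blast
qed

end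

lemma cyc_norm_bound:
  "cmod (poly (cyclotomic n) w) \<ge> \<bar>cmod w - 1\<bar> ^ totient n"
proof -
  define R where "R = {j\<in>{1..n}. coprime j n}"
  define \<zeta> where "\<zeta> j = cis (2 * pi * real j / real n)" for j
  have cR: "card R = totient n"
  proof -
    have "R = totatives n" unfolding R_def totatives_def by auto
    thus ?thesis by (simp add: totient_def)
  qed
  have "poly (cyclotomic n) w = (\<Prod>j\<in>R. w - \<zeta> j)"
    unfolding cyclotomic_def R_def \<zeta>_def by (simp add: poly_prod)
  hence "cmod (poly (cyclotomic n) w) = (\<Prod>j\<in>R. cmod (w - \<zeta> j))" by (simp add: prod_norm)
  also have "\<dots> \<ge> (\<Prod>j\<in>R. \<bar>cmod w - 1\<bar>)"
  proof (rule prod_mono, rule conjI)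
    fix j assume "j \<in> R"
    show "0 \<le> \<bar>cmod w - 1\<bar>" by simp
    have "\<bar>cmod w - cmod (\<zeta> j)\<bar> \<le> cmod (w - \<zeta> j)" by (rule norm_triangle_ineq3)
    thus "\<bar>cmod w - 1\<bar> \<le> cmod (w - \<zeta> j)" by (simp add: \<zeta>_def)
  qed
  also have "(\<Prod>j\<in>R. \<bar>cmod w - 1\<bar>) = \<bar>cmod w - 1\<bar> ^ totient n" using cR by simp
  finally show ?thesis .
qed

lemma choose_k:
  fixes r :: "'s \<Rightarrow> real"
  assumes E: "finite E" and r: "\<And>s. s \<in> E \<Longrightarrow> r s \<ge> 0" and s0: "s0 \<in> E" "r s0 > 1"
  shows "\<exists>k\<ge>1. (\<forall>s\<in>E. r s < 1 \<longrightarrow> r s ^ k \<le> 1/2) \<and> (\<forall>s\<in>E. r s > 1 \<longrightarrow> r s ^ k \<ge> 2) \<and>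
               r s0 ^ k \<ge> 2 ^ card E + 1"
proof -
  have big: "eventually (\<lambda>k. C \<le> x ^ k) sequentially" if "x > 1" for x C :: real
  proof -
    have "filterlim (\<lambda>k. x ^ k) at_infinity sequentially"
      by (rule filterlim_realpow_sequentially_gt1) (use that in simp)
    hence "filterlim (\<lambda>k. norm (x ^ k)) at_top sequentially"
      by (rule filterlim_at_infinity_imp_norm_at_top)
    hence "eventually (\<lambda>k. C \<le> norm (x ^ k)) sequentially" by (simp add: filterlim_at_top)
    thus ?thesis using that by (simp add: abs_of_pos)
  qed
  have small: "eventually (\<lambda>k. x ^ k \<le> 1/2) sequentially" if "0 \<le> x" "x < 1" for x :: real
  proof -
    have "(\<lambda>k. x ^ k) \<longlonglongrightarrow> 0" by (rule LIMSEQ_power_zero) (use that in simp)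
    hence "eventually (\<lambda>k. x ^ k < 1/2) sequentially" by (rule order_tendstoD(2)) simp
    thus ?thesis by (rule eventually_mono) simp
  qed
  have e1: "eventually (\<lambda>k. \<forall>s\<in>E. r s < 1 \<longrightarrow> r s ^ k \<le> 1/2) sequentially"
  proof (rule eventually_ball_finite[OF E], rule ballI)
    fix s assume sE: "s \<in> E"
    show "eventually (\<lambda>k. r s < 1 \<longrightarrow> r s ^ k \<le> 1/2) sequentially"
    proof (cases "r s < 1")
      case True thus ?thesis using small[OF r[OF sE] True] by (auto elim: eventually_mono)
    qed simp
  qed
  have e1': "eventually (\<lambda>k. \<forall>s\<in>E. r s > 1 \<longrightarrow> r s ^ k \<ge> 2) sequentially"
  proof (rule eventually_ball_finite[OF E], rule ballI)
    fix s assume "s \<in> E"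
    show "eventually (\<lambda>k. r s > 1 \<longrightarrow> r s ^ k \<ge> 2) sequentially"
    proof (cases "r s > 1")
      case True thus ?thesis using big[OF True, of 2] by (auto elim: eventually_mono)
    qed simp
  qed
  have e2: "eventually (\<lambda>k. r s0 ^ k \<ge> 2 ^ card E + 1) sequentially" by (rule big[OF s0(2)])
  have e3: "eventually (\<lambda>k. k \<ge> (1::nat)) sequentially" by (rule eventually_ge_at_top)
  have "eventually (\<lambda>k. k \<ge> 1 \<and> (\<forall>s\<in>E. r s < 1 \<longrightarrow> r s ^ k \<le> 1/2) \<and> (\<forall>s\<in>E. r s > 1 \<longrightarrow> r s ^ k \<ge> 2) \<and>
               r s0 ^ k \<ge> 2 ^ card E + 1) sequentially" (is "eventually ?P _")
    using e1 e1' e2 e3 by eventually_elim auto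
  then obtain N where "\<forall>n\<ge>N. ?P n" unfolding eventually_sequentially ..
  hence "?P N" by simp
  thus ?thesis by blast
qed

lemma prod_ge2:
  fixes r :: "'s \<Rightarrow> real"
  assumes E: "finite E" and r: "\<And>s. s \<in> E \<Longrightarrow> r s \<ge> 0 \<and> r s \<noteq> 1" and s0: "s0 \<in> E"
    and k1: "\<forall>s\<in>E. r s < 1 \<longrightarrow> r s ^ k \<le> 1/2" and k2: "\<forall>s\<in>E. r s > 1 \<longrightarrow> r s ^ k \<ge> 2"
    and k3: "r s0 ^ k \<ge> 2 ^ card E + 1"
  shows "(\<Prod>s\<in>E. \<bar>r s ^ k - 1\<bar>) \<ge> 2"
proof -
  define E' where "E' = E - {s0}"
  have cE: "card E = Suc (card E')"
  proof -
    have "card E' = card E - 1" unfolding E'_def using E s0 by (simp add: card_Diff_singleton)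
    moreover have "card E > 0" using E s0 by (auto simp: card_gt_0_iff)
    ultimately show ?thesis by simp
  qed
  have "(\<Prod>s\<in>E. \<bar>r s ^ k - 1\<bar>) = \<bar>r s0 ^ k - 1\<bar> * (\<Prod>s\<in>E'. \<bar>r s ^ k - 1\<bar>)"
    unfolding E'_def using E s0 by (subst prod.remove[of _ s0]) auto
  also have "\<dots> \<ge> 2 ^ card E * (\<Prod>s\<in>E'. (1/2::real))"
  proof (rule mult_mono)
    show "2 ^ card E \<le> \<bar>r s0 ^ k - 1\<bar>" using k3 by simp
    show "(\<Prod>s\<in>E'. (1/2::real)) \<le> (\<Prod>s\<in>E'. \<bar>r s ^ k - 1\<bar>)"
    proof (rule prod_mono, rule conjI)
      fix s assume s: "s \<in> E'"
      hence sE: "s \<in> E" unfolding E'_def by auto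
      show "0 \<le> (1/2::real)" by simp
      show "1/2 \<le> \<bar>r s ^ k - 1\<bar>"
      proof (cases "r s < 1")
        case True
        have h: "r s ^ k \<le> 1/2" using k1 sE True by blast
        hence "\<bar>r s ^ k - 1\<bar> = 1 - r s ^ k" by linarith
        thus ?thesis using h by linarith
      next
        case False
        hence "r s > 1" using r[OF sE] by simp
        hence h: "r s ^ k \<ge> 2" using k2 sE by blast
        hence "\<bar>r s ^ k - 1\<bar> = r s ^ k - 1" by linarith
        thus ?thesis using h by linarith
      qed
    qed
  qed simp_all
  also have "2 ^ card E * (\<Prod>s\<in>E'. (1/2::real)) = 2"
    unfolding cE by (simp add: power_one_over field_simps)
  finally show ?thesis .
qed

theorem lemma2p1:
  fixes K :: "complex set" and m :: nat and u :: complex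
  assumes "galois_number_field K m"
    and "u \<in> unit_group K \<inter> S_set"
  shows "\<exists>k::nat. k \<ge> 1 \<and> (\<exists>c::real. c > 0 \<and>
           (\<forall>n::nat. n > 0 \<longrightarrow> real (totient n) \<ge> real n / 2 \<longrightarrow>
              cmod (nf_norm K (poly (cyclotomic n) (u ^ k))) \<ge> exp (c * real n)))"
proof -
  have K: "subfield_C K" and dK: "degree_over_Q K m" using assms(1) by (auto simp: galois_number_field_def)
  obtain B where B: "finite B" "card B = m" "B \<subseteq> K"
    "\<forall>x\<in>K. \<exists>c :: complex \<Rightarrow> rat. x = (\<Sum>b\<in>B. of_rat (c b) * b)"
    using dK unfolding degree_over_Q_def by blast
  interpret nf K m B using K B by unfold_locales
  have uK: "u \<in> K" and ai: "algebraic_int u" and u0: "u \<noteq> 0"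
    and uS: "\<forall>z\<in>conjugates u. cmod z \<noteq> 1"
    using assms(2) by (auto simp: unit_group_def ring_of_integers_def S_set_def)
  obtain q where q: "ratpoly q" "lead_coeff q = 1" "poly q u = 0"
    "\<forall>P. ratpoly P \<and> P \<noteq> 0 \<and> poly P u = 0 \<longrightarrow> degree q \<le> degree P"
    using minpoly_exists[OF algebraic_int_imp_algebraic[OF ai]] by blast
  interpret emb_ctx K m B u q using ai u0 q uK by unfold_locales auto
  obtain z where z: "poly q z = 0" "cmod z > 1" using q_big_root[OF uS] by blast
  obtain \<sigma>0 where \<sigma>0: "\<sigma>0 \<in> embeddings K" "\<sigma>0 u = z" using embedding_for_root[OF z(1)] by blast
  define E where "E = embeddings K"
  have finE: "finite E" unfolding E_def by (rule finite_embeddings)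
  define r where "r \<sigma> = cmod (\<sigma> u)" for \<sigma> :: "complex \<Rightarrow> complex"
  have rE: "r \<sigma> \<ge> 0 \<and> r \<sigma> \<noteq> 1" if "\<sigma> \<in> E" for \<sigma>
    using uS sconj[OF K that[unfolded E_def] uK] by (simp add: r_def)
  obtain k where k: "k \<ge> 1" "\<forall>s\<in>E. r s < 1 \<longrightarrow> r s ^ k \<le> 1/2" "\<forall>s\<in>E. r s > 1 \<longrightarrow> r s ^ k \<ge> 2"
    "r \<sigma>0 ^ k \<ge> 2 ^ card E + 1"
    using choose_k[OF finE _ \<sigma>0(1)[folded E_def], of r] rE z(2) \<sigma>0(2) by (auto simp: r_def)
  have P2: "(\<Prod>s\<in>E. \<bar>r s ^ k - 1\<bar>) \<ge> 2"
    by (rule prod_ge2[OF finE rE \<sigma>0(1)[folded E_def] k(2-4)])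
  define c where "c = ln 2 / (2::real)"
  have c0: "c > 0" unfolding c_def by simp
  have main: "cmod (nf_norm K (poly (cyclotomic n) (u ^ k))) \<ge> exp (c * real n)"
    if n: "n > 0" "real (totient n) \<ge> real n / 2" for n
  proof -
    have rp: "ratpoly (cyclotomic n)" by (rule intpoly_ratpoly[OF intpoly_cyclotomic])
    have ukK: "u ^ k \<in> K" by (rule Kpower[OF K uK])
    have "cmod (nf_norm K (poly (cyclotomic n) (u ^ k))) = (\<Prod>\<sigma>\<in>E. cmod (\<sigma> (poly (cyclotomic n) (u ^ k))))"
      unfolding nf_norm_def E_def by (simp add: prod_norm)
    also have "\<dots> = (\<Prod>\<sigma>\<in>E. cmod (poly (cyclotomic n) (\<sigma> u ^ k)))"
    proof (rule prod.cong[OF refl])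
      fix \<sigma> assume "\<sigma> \<in> E"
      hence \<sigma>: "\<sigma> \<in> embeddings K" by (simp add: E_def)
      show "cmod (\<sigma> (poly (cyclotomic n) (u ^ k))) = cmod (poly (cyclotomic n) (\<sigma> u ^ k))"
        using spoly[OF K \<sigma> rp ukK] spower[OF K \<sigma> uK] by simp
    qed
    also have "\<dots> \<ge> (\<Prod>\<sigma>\<in>E. \<bar>r \<sigma> ^ k - 1\<bar> ^ totient n)"
    proof (rule prod_mono, rule conjI)
      fix \<sigma> assume "\<sigma> \<in> E"
      show "0 \<le> \<bar>r \<sigma> ^ k - 1\<bar> ^ totient n" by simp
      show "\<bar>r \<sigma> ^ k - 1\<bar> ^ totient n \<le> cmod (poly (cyclotomic n) (\<sigma> u ^ k))"
        using cyc_norm_bound[where n = n and w = "\<sigma> u ^ k"] by (simp add: r_def norm_power)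
    qed
    also have "(\<Prod>\<sigma>\<in>E. \<bar>r \<sigma> ^ k - 1\<bar> ^ totient n) = (\<Prod>\<sigma>\<in>E. \<bar>r \<sigma> ^ k - 1\<bar>) ^ totient n"
      by (rule prod_power_distrib[symmetric])
    also have "\<dots> \<ge> 2 ^ totient n" using P2 by (intro power_mono) auto
    also have "(2::real) ^ totient n = 2 powr real (totient n)" by (simp add: powr_realpow)
    also have "\<dots> \<ge> 2 powr (real n / 2)" using n(2) by (intro powr_mono) auto
    also have "2 powr (real n / 2) = exp (c * real n)" unfolding c_def powr_def by (simp add: field_simps)
    finally show ?thesis .
  qed
  show ?thesis using k(1) c0 main by blast
qed


end
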